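(* Let $\varphi$ be a computable forecasting system. Then a path $\omega\in\Omega$ is Martin-Löf test random for $\varphi$ if and only if it is uniformly random for the class of probability measures $\mathcal M_\varphi=\{\mu_{\psi}:\psi\text{ precise forecasting system with }\psi(s)\in\varphi(s)\text{ for all }s\in\mathbb S\}$.
   Context: Notation: $\mathbb N_0=\{0,1,2,\dots\}$; $\Omega=\{0,1\}^{\mathbb N}$ with the Cantor topology and Borel $\sigma$-algebra; $\mathbb S=\bigcup_{n}\{0,1\}^n$ finite binary strings, $\square$ the empty string, $|s|$ length, $s^k$ the prefix of length $k$ and $s_{k}$ the $k$-th entry of $s$, $\omega^n$ the first $n$ entries of $\omega$. $[s]=\{\omega:\omega^{|s|}=s\}$, $[A]=\bigcup_{s\in A}[s]$; for $A\subseteq\mathbb N_0\times\mathbb S$, $A_n=\{s:(n,s)\in A\}$, and for $B\subseteq\mathbb Q\times\mathbb S$, $B_r=\{s:(r,s)\in B\}$. $\mathcal I$: nonempty closed subintervals of $[0,1]$; $\overline E_I(f)=\max_{p\in I}[pf(1)+(1-p)f(0)]$. A forecasting system is $\varphi:\mathbb S\to\mathcal I$, $\underline\varphi=\min\varphi$, $\overline\varphi=\max\varphi$; precise if $\underline\varphi=\overline\varphi$ (identified with a map $\mathbb S\to[0,1]$). Supermartingale for $\varphi$: $M:\mathbb S\to\mathbb R$ with $\overline E_{\varphi(s)}(M(s\,\cdot))\le M(s)$ for all $s$. $\overline P_\varphi(G)=\inf\{M(\square):M\text{ supermartingale for }\varphi,\ \liminf_nM(\omega^n)\ge\mathbb 1_G(\omega)\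 \forall\omega\}$. Computability: recursive maps, recursive/recursively enumerable sets as usual; a real map $r$ on a countable encoded set is computable if there is a recursive rational $q$ with $|r(d)-q(d,N)|\le2^{-N}$; $\varphi$ is computable if $\underline\varphi,\overline\varphi$ are computable. A Martin-Löf test for $\varphi$ is a recursively enumerable $A\subseteq\mathbb N_0\times\mathbb S$ with $\overline P_\varphi([A_n])\le2^{-n}$ for all $n$; $\omega$ is Martin-Löf test random for $\varphi$ if $\omega\notin\bigcap_n[A_n]$ for every such $A$. For a precise forecasting system $\psi$, $\mu_\psi$ is the unique Borel probability measure on $\Omega$ with $\mu_\psi([s])=\prod_{k=0}^{|s|-1}\psi(s^k)^{s_{k+1}}(1-\psi(s^k))^{1-s_{k+1}}$ for all $s$. For a class $\mathcal C$ of Borel probability measures on $\Omega$, a $\mathcal C$-test is a map $\tau:\Omega\to[0,\infty]$ such that there is a recursively enumerable $B\subseteq\mathbb Q\times\mathbb S$ with $\{\omega:\tau(\omega)>r\}=[B_r]$ for all $r\in\mathbb Q$, and $\int\tau\,d\mu\le1$ for all $\mu\in\mathcal C$. A path $\omega$ is uniformly random for $\mathcal C$ if $\tau(\omega)<\infty$ for every $\mathcal C$-test $\tau$. *)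

theory Defs
  imports "HOL-Probability.Probability" "HOL-Library.Nat_Bijection"
begin

text \<open>Finite binary strings are bool lists (True = 1, False = 0); paths are
  functions nat => bool, where omega 0 is the first entry.  The string s^k is
  take k s and the k-th entry s_k (1-indexed) is s ! (k - 1).\<close>

definition prefix :: "(nat \<Rightarrow> bool) \<Rightarrow> nat \<Rightarrow> bool list" where
  "prefix \<omega> n = map \<omega> [0..<n]"

definition cyl :: "bool list \<Rightarrow> (nat \<Rightarrow> bool) set" where
  "cyl s = {\<omega>. prefix \<omega> (length s) = s}"

definition cyl_union :: "bool list set \<Rightarrow> (nat \<Rightarrow> bool) set" where
  "cyl_union A = (\<Union>s\<in>A. cyl s)"

definition section_nat :: "(nat \<times> bool list) set \<Rightarrow> nat \<Rightarrow> bool list set" where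
  "section_nat A n = {s. (n, s) \<in> A}"

definition section_rat :: "(rat \<times> bool list) set \<Rightarrow> rat \<Rightarrow> bool list set" where
  "section_rat B r = {s. (r, s) \<in> B}"

text \<open>Cantor space with its Borel sigma-algebra (= product sigma-algebra of
  countably many copies of the discrete space {0,1}).\<close>

definition cantor :: "(nat \<Rightarrow> bool) measure" where
  "cantor = Pi\<^sub>M UNIV (\<lambda>_. count_space UNIV)"

definition borel_prob :: "(nat \<Rightarrow> bool) measure \<Rightarrow> bool" where
  "borel_prob \<mu> \<longleftrightarrow> sets \<mu> = sets cantor \<and> prob_space \<mu>"

definition interval01 :: "real set \<Rightarrow> bool" where
  "interval01 I \<longleftrightarrow> (\<exists>a b. 0 \<le> a \<and> a \<le> b \<and> b \<le> 1 \<and> I = {a..b})"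

definition forecasting_system :: "(bool list \<Rightarrow> real set) \<Rightarrow> bool" where
  "forecasting_system \<phi> \<longleftrightarrow> (\<forall>s. interval01 (\<phi> s))"

definition lower_fs :: "(bool list \<Rightarrow> real set) \<Rightarrow> bool list \<Rightarrow> real" where
  "lower_fs \<phi> s = Inf (\<phi> s)"

definition upper_fs :: "(bool list \<Rightarrow> real set) \<Rightarrow> bool list \<Rightarrow> real" where
  "upper_fs \<phi> s = Sup (\<phi> s)"

text \<open>Precise forecasting systems are identified with maps into [0,1].\<close>
definition precise_fs :: "(bool list \<Rightarrow> real) \<Rightarrow> bool" where
  "precise_fs \<psi> \<longleftrightarrow> (\<forall>s. 0 \<le> \<psi> s \<and> \<psi> s \<le> 1)"

definition upper_exp :: "real set \<Rightarrow> (bool \<Rightarrow> real) \<Rightarrow> real" where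
  "upper_exp I f = Sup ((\<lambda>p. p * f True + (1 - p) * f False) ` I)"

definition supermartingale :: "(bool list \<Rightarrow> real set) \<Rightarrow> (bool list \<Rightarrow> real) \<Rightarrow> bool" where
  "supermartingale \<phi> M \<longleftrightarrow> (\<forall>s. upper_exp (\<phi> s) (\<lambda>b. M (s @ [b])) \<le> M s)"

definition upper_prob :: "(bool list \<Rightarrow> real set) \<Rightarrow> (nat \<Rightarrow> bool) set \<Rightarrow> ereal" where
  "upper_prob \<phi> G = (INF M \<in> {M. supermartingale \<phi> M \<and>
      (\<forall>\<omega>. ereal (indicator G \<omega>) \<le> liminf (\<lambda>n. ereal (M (prefix \<omega> n))))}. ereal (M []))"

datatype recf = Zero | Succ | Proj nat | Comp recf "recf list" | Prim recf recf | Mini recf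

inductive eval_recf :: "recf \<Rightarrow> nat list \<Rightarrow> nat \<Rightarrow> bool" where
  zero: "eval_recf Zero xs 0"
| succ: "eval_recf Succ (x # xs) (Suc x)"
| proj: "i < length xs \<Longrightarrow> eval_recf (Proj i) xs (xs ! i)"
| comp: "list_all2 (\<lambda>g y. eval_recf g xs y) gs ys \<Longrightarrow> eval_recf f ys z \<Longrightarrow>
         eval_recf (Comp f gs) xs z"
| prim0: "eval_recf g xs y \<Longrightarrow> eval_recf (Prim g h) (0 # xs) y"
| primS: "eval_recf (Prim g h) (n # xs) r \<Longrightarrow> eval_recf h (n # r # xs) y \<Longrightarrow>
          eval_recf (Prim g h) (Suc n # xs) y"
| mini: "eval_recf f (n # xs) 0 \<Longrightarrow> (\<forall>m<n. \<exists>k. eval_recf f (m # xs) (Suc k)) \<Longrightarrow>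
         eval_recf (Mini f) xs n"
monos list_all2_mono

definition code_str :: "bool list \<Rightarrow> nat" where
  "code_str s = list_encode (map (\<lambda>b. if b then 1 else 0) s)"

definition code_rat :: "rat \<Rightarrow> nat" where
  "code_rat q = prod_encode (int_encode (fst (quotient_of q)), nat (snd (quotient_of q)))"

definition re_nat_str :: "(nat \<times> bool list) set \<Rightarrow> bool" where
  "re_nat_str A \<longleftrightarrow> (\<exists>f. \<forall>n s. (n, s) \<in> A \<longleftrightarrow> (\<exists>y. eval_recf f [n, code_str s] y))"

definition re_rat_str :: "(rat \<times> bool list) set \<Rightarrow> bool" where
  "re_rat_str B \<longleftrightarrow> (\<exists>f. \<forall>r s. (r, s) \<in> B \<longleftrightarrow> (\<exists>y. eval_recf f [code_rat r, code_str s] y))"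

definition computable_real_str :: "(bool list \<Rightarrow> real) \<Rightarrow> bool" where
  "computable_real_str r \<longleftrightarrow> (\<exists>q :: bool list \<Rightarrow> nat \<Rightarrow> rat.
      (\<exists>f. \<forall>s N. eval_recf f [code_str s, N] (code_rat (q s N))) \<and>
      (\<forall>s N. \<bar>r s - real_of_rat (q s N)\<bar> \<le> (1/2) ^ N))"

definition computable_fs :: "(bool list \<Rightarrow> real set) \<Rightarrow> bool" where
  "computable_fs \<phi> \<longleftrightarrow> computable_real_str (lower_fs \<phi>) \<and> computable_real_str (upper_fs \<phi>)"

definition MLtest :: "(bool list \<Rightarrow> real set) \<Rightarrow> (nat \<times> bool list) set \<Rightarrow> bool" where
  "MLtest \<phi> A \<longleftrightarrow> re_nat_str A \<and>
     (\<forall>n. upper_prob \<phi> (cyl_union (section_nat A n)) \<le> ereal ((1/2) ^ n))"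

definition MLtest_random :: "(bool list \<Rightarrow> real set) \<Rightarrow> (nat \<Rightarrow> bool) \<Rightarrow> bool" where
  "MLtest_random \<phi> \<omega> \<longleftrightarrow>
     (\<forall>A. MLtest \<phi> A \<longrightarrow> \<omega> \<notin> (\<Inter>n. cyl_union (section_nat A n)))"

definition is_mu_of :: "(bool list \<Rightarrow> real) \<Rightarrow> (nat \<Rightarrow> bool) measure \<Rightarrow> bool" where
  "is_mu_of \<psi> \<mu> \<longleftrightarrow> borel_prob \<mu> \<and>
     (\<forall>s. measure \<mu> (cyl s) =
        (\<Prod>k<length s. if s ! k then \<psi> (take k s) else 1 - \<psi> (take k s)))"

definition M_class :: "(bool list \<Rightarrow> real set) \<Rightarrow> (nat \<Rightarrow> bool) measure set" where
  "M_class \<phi> = {\<mu>. \<exists>\<psi>. precise_fs \<psi> \<and> (\<forall>s. \<psi> s \<in> \<phi> s) \<and> is_mu_of \<psi> \<mu>}"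

definition C_test :: "(nat \<Rightarrow> bool) measure set \<Rightarrow> ((nat \<Rightarrow> bool) \<Rightarrow> ennreal) \<Rightarrow> bool" where
  "C_test C \<tau> \<longleftrightarrow>
     (\<exists>B. re_rat_str B \<and>
        (\<forall>r. {\<omega>. ereal (real_of_rat r) < enn2ereal (\<tau> \<omega>)} = cyl_union (section_rat B r))) \<and>
     (\<forall>\<mu>\<in>C. (\<integral>\<^sup>+ \<omega>. \<tau> \<omega> \<partial>\<mu>) \<le> 1)"

definition uniformly_random :: "(nat \<Rightarrow> bool) measure set \<Rightarrow> (nat \<Rightarrow> bool) \<Rightarrow> bool" where
  "uniformly_random C \<omega> \<longleftrightarrow> (\<forall>\<tau>. C_test C \<tau> \<longrightarrow> \<tau> \<omega> < \<infinity>)"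

end

theory Submission
  imports Defs
begin


inductive_cases evZeroE: "eval_recf Zero xs y"
inductive_cases evSuccE: "eval_recf Succ xs y"
inductive_cases evProjE: "eval_recf (Proj i) xs y"
inductive_cases evCompE: "eval_recf (Comp f gs) xs y"
inductive_cases evPrimE: "eval_recf (Prim g h) xs y"
inductive_cases evMiniE: "eval_recf (Mini f) xs y"

lemma eval_recf_det:
  "eval_recf f xs y \<Longrightarrow> eval_recf f xs y' \<Longrightarrow> y = y'"
proof (induction arbitrary: y' rule: eval_recf.induct)
  case (zero xs) then show ?case by (auto elim: evZeroE)
next
  case (succ x xs) then show ?case by (auto elim: evSuccE)
next
  case (proj i xs) then show ?case by (auto elim: evProjE)
next
  case (comp xs gs ys f z)
  from comp.prems obtain ys' where a: "list_all2 (\<lambda>g y. eval_recf g xs y) gs ys'" and b: "eval_recf f ys' y'"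
    by (auto elim: evCompE)
  have "ys = ys'" using comp.IH(1) a
  proof (induction gs arbitrary: ys ys')
    case Nil then show ?case by auto
  next
    case (Cons g gs) then show ?case by (auto simp: list_all2_Cons1)
  qed
  then show ?case using comp.IH(2) b by auto
next
  case (prim0 g xs y h)
  from prim0.prems have "eval_recf g xs y'" by (rule evPrimE) auto
  then show ?case using prim0.IH by blast
next
  case (primS g h n xs r y)
  from primS.prems obtain r' where "eval_recf (Prim g h) (n # xs) r'" "eval_recf h (n # r' # xs) y'"
    by (auto elim: evPrimE)
  then show ?case using primS.IH by blast
next
  case (mini f n xs)
  from mini.prems obtain n' where a: "eval_recf f (n' # xs) 0" "\<forall>m<n'. \<exists>k. eval_recf f (m # xs) (Suc k)" "y' = n'"
    by (auto elim: evMiniE)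
  show ?case
  proof (cases n n' rule: linorder_cases)
    case less
    then obtain k where "eval_recf f (n # xs) (Suc k)" using a by auto
    then show ?thesis using mini.IH(1) by blast
  next
    case greater
    then obtain k where "eval_recf f (n' # xs) (Suc k)" "\<forall>y'. eval_recf f (n' # xs) y' \<longrightarrow> Suc k = y'" using mini.IH(2) by auto
    with a(1) show ?thesis by auto
  qed (use a in auto)
qed


lemma ev_comp: "list_all2 (\<lambda>g y. eval_recf g xs y) gs ys \<Longrightarrow> eval_recf f ys z \<Longrightarrow> eval_recf (Comp f gs) xs z"
  by (rule eval_recf.comp)

lemma ev_comp1: "eval_recf g1 xs y1 \<Longrightarrow> eval_recf f [y1] z \<Longrightarrow> eval_recf (Comp f [g1]) xs z"
  by (rule eval_recf.comp[where ys="[y1]"]) auto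
lemma ev_comp2: "eval_recf g1 xs y1 \<Longrightarrow> eval_recf g2 xs y2 \<Longrightarrow> eval_recf f [y1,y2] z \<Longrightarrow> eval_recf (Comp f [g1,g2]) xs z"
  by (rule eval_recf.comp[where ys="[y1,y2]"]) auto
lemma ev_comp3: "eval_recf g1 xs y1 \<Longrightarrow> eval_recf g2 xs y2 \<Longrightarrow> eval_recf g3 xs y3 \<Longrightarrow> eval_recf f [y1,y2,y3] z \<Longrightarrow> eval_recf (Comp f [g1,g2,g3]) xs z"
  by (rule eval_recf.comp[where ys="[y1,y2,y3]"]) auto

lemma ev_proj: "i < length xs \<Longrightarrow> y = xs ! i \<Longrightarrow> eval_recf (Proj i) xs y"
  using eval_recf.proj by auto
lemma ev_zero: "y = 0 \<Longrightarrow> eval_recf Zero xs y"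
  using eval_recf.zero by auto
lemma ev_succ: "y = Suc x \<Longrightarrow> eval_recf Succ [x] y"
  using eval_recf.succ by auto

lemma ev_prim:
  assumes "eval_recf g xs (F 0)"
    and "\<And>n. eval_recf h (n # F n # xs) (F (Suc n))"
  shows "eval_recf (Prim g h) (n # xs) (F n)"
proof (induction n)
  case 0 then show ?case using assms(1) by (rule eval_recf.prim0)
next
  case (Suc n) then show ?case using assms(2) by (rule eval_recf.primS)
qed

lemma ev_mini:
  assumes "eval_recf f (n # xs) 0" "\<And>m. m < n \<Longrightarrow> eval_recf f (m # xs) (Suc (F m))"
  shows "eval_recf (Mini f) xs n"
  using assms by (intro eval_recf.mini) auto

fun constf :: "nat \<Rightarrow> recf" where
  "constf 0 = Zero" | "constf (Suc n) = Comp Succ [constf n]"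

lemma ev_const: "eval_recf (constf n) xs n"
  by (induction n) (auto intro: ev_zero ev_comp1 ev_succ)
declare constf.simps[simp del]

definition "add_r = Prim (Proj 0) (Comp Succ [Proj 1])"
lemma ev_add: "y = n + x \<Longrightarrow> eval_recf add_r [n, x] y"
  unfolding add_r_def
  by (hypsubst, rule ev_prim[where F="\<lambda>n. n + x"]) (auto intro!: ev_proj ev_comp1 ev_succ)

definition "mult_r = Prim Zero (Comp add_r [Proj 1, Proj 2])"
lemma ev_mult: "y = n * x \<Longrightarrow> eval_recf mult_r [n, x] y"
  unfolding mult_r_def
  by (hypsubst, rule ev_prim[where F="\<lambda>n. n * x"]) (auto intro!: ev_proj ev_zero ev_comp2 ev_add)

definition "pred_r = Prim Zero (Proj 0)"
lemma ev_pred: "y = n - 1 \<Longrightarrow> eval_recf pred_r [n] y"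
  unfolding pred_r_def
  by (hypsubst, rule ev_prim[where F="\<lambda>n. n - 1" and xs="[]"]) (auto intro!: ev_proj ev_zero)

definition "sub_r = Prim (Proj 0) (Comp pred_r [Proj 1])"
lemma ev_sub: "z = x - y \<Longrightarrow> eval_recf sub_r [y, x] z"
  unfolding sub_r_def
  by (hypsubst, rule ev_prim[where F="\<lambda>n. x - n" and xs="[x]"]) (auto intro!: ev_proj ev_comp1 ev_pred)

definition "sg_r = Prim Zero (constf 1)"
lemma ev_sg: "y = min n 1 \<Longrightarrow> eval_recf sg_r [n] y"
  unfolding sg_r_def
  by (hypsubst, rule ev_prim[where F="\<lambda>n. min n 1" and xs="[]"]) (auto intro!: ev_zero ev_const)

definition "nsg_r = Comp sub_r [Comp sg_r [Proj 0], constf 1]"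
lemma ev_nsg: "y = 1 - min n 1 \<Longrightarrow> eval_recf nsg_r [n] y"
  unfolding nsg_r_def by (auto intro!: ev_comp2 ev_comp1 ev_sub ev_sg ev_proj ev_const)

definition "lt_r = Comp sg_r [Comp sub_r [Proj 0, Proj 1]]"
lemma ev_lt: "z = (if x < y then 1 else 0) \<Longrightarrow> eval_recf lt_r [x, y] z"
  unfolding lt_r_def by (auto intro!: ev_comp2 ev_comp1 ev_sub ev_sg ev_proj)

definition "tri_r = Prim Zero (Comp add_r [Proj 1, Comp Succ [Proj 0]])"
lemma ev_tri: "y = triangle n \<Longrightarrow> eval_recf tri_r [n] y"
  unfolding tri_r_def
  by (hypsubst, rule ev_prim[where F="triangle" and xs="[]"]) (auto intro!: ev_zero ev_comp2 ev_comp1 ev_add ev_succ ev_proj simp: triangle_Suc)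

definition "pe_r = Comp add_r [Comp tri_r [Comp add_r [Proj 0, Proj 1]], Proj 0]"
lemma ev_pe: "y = prod_encode (a, b) \<Longrightarrow> eval_recf pe_r [a, b] y"
  unfolding pe_r_def prod_encode_def
  by (auto intro!: ev_comp2 ev_comp1 ev_add ev_tri ev_proj)


lemma prod_decode_tri:
  assumes "prod_decode z = (a, b)"
  shows "z = triangle (a + b) + a"
  using prod_decode_inverse[of z] assms by (simp add: prod_encode_def)

definition "w_r = Mini (Comp nsg_r [Comp lt_r [Proj 1, Comp tri_r [Comp Succ [Proj 0]]]])"

lemma ev_w: assumes "prod_decode z = (a, b)" "y = a + b" shows "eval_recf w_r [z] y"
proof -
  have z: "z = triangle (a + b) + a" using prod_decode_tri[OF assms(1)] .
  have tri_mono: "triangle m \<le> triangle n" if "m \<le> n" for m n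
    using that unfolding triangle_def by (intro div_le_mono mult_le_mono) auto
  show ?thesis unfolding w_r_def assms(2)
  proof (rule ev_mini[where F="\<lambda>_. 0"])
    show "eval_recf (Comp nsg_r [Comp lt_r [Proj 1, Comp tri_r [Comp Succ [Proj 0]]]]) [a + b, z] 0"
      by (auto intro!: ev_comp1 ev_comp2 ev_nsg ev_lt ev_proj ev_tri ev_succ simp: z triangle_Suc)
  next
    fix m assume m: "m < a + b"
    have "triangle (Suc m) \<le> triangle (a + b)" using m tri_mono[of "Suc m" "a+b"] by simp
    then have "\<not> z < triangle (Suc m)" using z by auto
    then show "eval_recf (Comp nsg_r [Comp lt_r [Proj 1, Comp tri_r [Comp Succ [Proj 0]]]]) [m, z] (Suc 0)"
      by (auto intro!: ev_comp1 ev_comp2 ev_nsg ev_lt ev_proj ev_tri ev_succ)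
  qed
qed

definition "fst_r = Comp sub_r [Comp tri_r [w_r], Proj 0]"
definition "snd_r = Comp sub_r [fst_r, w_r]"

lemma ev_fst: "y = fst (prod_decode z) \<Longrightarrow> eval_recf fst_r [z] y"
proof -
  assume y: "y = fst (prod_decode z)"
  obtain a b where ab: "prod_decode z = (a, b)" by fastforce
  have z: "z = triangle (a + b) + a" using prod_decode_tri[OF ab] .
  show ?thesis unfolding fst_r_def
    apply (rule ev_comp2)
      apply (rule ev_comp1, rule ev_w[OF ab refl], rule ev_tri, rule refl)
     apply (rule ev_proj; simp)
    apply (rule ev_sub)
    using y ab z by simp
qed

lemma ev_snd: "y = snd (prod_decode z) \<Longrightarrow> eval_recf snd_r [z] y"
  unfolding snd_r_def
  apply (cases "prod_decode z")
  apply (rule ev_comp2)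
    apply (rule ev_fst, rule refl)
   apply (rule ev_w, assumption, rule refl)
  apply (rule ev_sub)
  apply simp
  done

definition b2n :: "bool \<Rightarrow> nat" where "b2n b = (if b then 1 else 0)"

lemma code_str_Nil[simp]: "code_str [] = 0"
  by (simp add: code_str_def)
lemma code_str_Cons[simp]: "code_str (b # s) = Suc (prod_encode (b2n b, code_str s))"
  by (simp add: code_str_def b2n_def)
lemma code_str_eq0[simp]: "code_str s = 0 \<longleftrightarrow> s = []"
  by (cases s) auto

definition tl_c :: "nat \<Rightarrow> nat" where "tl_c c = snd (prod_decode (c - 1))"
definition hd_c :: "nat \<Rightarrow> nat" where "hd_c c = fst (prod_decode (c - 1))"

lemma tl_c_Suc[simp]: "tl_c (Suc (prod_encode (a, b))) = b"
  by (simp add: tl_c_def)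
lemma hd_c_Suc[simp]: "hd_c (Suc (prod_encode (a, b))) = a"
  by (simp add: hd_c_def)
lemma tl_c0[simp]: "tl_c 0 = 0"
  by (simp add: tl_c_def prod_decode_def prod_decode_aux.simps[of 0 0])
lemma tl_c_Cons: "tl_c (code_str (b # s)) = code_str s"
  by (simp add: tl_c_def)
lemma hd_c_Cons[simp]: "hd_c (code_str (b # s)) = b2n b"
  by (simp add: hd_c_def)
lemma tl_c_Nil[simp]: "tl_c (code_str []) = code_str []"
  by (simp add: tl_c_def prod_decode_def prod_decode_aux.simps[of 0 0])

definition "tl_r = Comp snd_r [Comp pred_r [Proj 0]]"
definition "hd_r = Comp fst_r [Comp pred_r [Proj 0]]"

lemma ev_tl: "y = tl_c c \<Longrightarrow> eval_recf tl_r [c] y"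
  unfolding tl_r_def tl_c_def by (auto intro!: ev_comp1 ev_snd ev_pred ev_proj)
lemma ev_hd: "y = hd_c c \<Longrightarrow> eval_recf hd_r [c] y"
  unfolding hd_r_def hd_c_def by (auto intro!: ev_comp1 ev_fst ev_pred ev_proj)

definition "tlit_r = Prim (Proj 0) (Comp tl_r [Proj 1])"

lemma ev_tlit: "y = (tl_c ^^ i) c \<Longrightarrow> eval_recf tlit_r [i, c] y"
  unfolding tlit_r_def
  by (hypsubst, rule ev_prim[where F="\<lambda>i. (tl_c ^^ i) c"]) (auto intro!: ev_proj ev_comp1 ev_tl)

lemma tl_c_iter: "(tl_c ^^ i) (code_str s) = code_str (drop i s)"
proof (induction i arbitrary: s)
  case 0 then show ?case by simp
next
  case (Suc i)
  show ?case
  proof (cases s)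
    case Nil
    have "(tl_c ^^ i) (code_str []) = code_str []" for i
      by (induction i) auto
    then show ?thesis using Nil by (simp del: funpow.simps add: funpow_Suc_right) 
  next
    case (Cons b s') then show ?thesis using Suc by (simp add: funpow_Suc_right del: funpow.simps)
  qed
qed

definition "len_r = Mini (Comp sg_r [tlit_r])"

lemma ev_len: "y = length s \<Longrightarrow> eval_recf len_r [code_str s] y"
  unfolding len_r_def
proof (hypsubst, rule ev_mini[where F="\<lambda>_. 0"])
  show "eval_recf (Comp sg_r [tlit_r]) [length s, code_str s] 0"
    by (auto intro!: ev_comp1 ev_sg ev_tlit simp: tl_c_iter)
  fix m assume "m < length s"
  then have "code_str (drop m s) \<noteq> 0" by simp
  then have h: "min (code_str (drop m s)) (Suc 0) = Suc 0" by (cases "code_str (drop m s)") auto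
  show "eval_recf (Comp sg_r [tlit_r]) [m, code_str s] (Suc 0)"
    by (intro ev_comp1[OF ev_tlit[OF refl] ev_sg]) (simp only: tl_c_iter h One_nat_def)
qed

definition "nth_r = Comp hd_r [tlit_r]"

lemma ev_nth: "i < length s \<Longrightarrow> y = b2n (s ! i) \<Longrightarrow> eval_recf nth_r [i, code_str s] y"
  unfolding nth_r_def
  apply (rule ev_comp1, rule ev_tlit, rule refl, rule ev_hd)
  apply (simp only: tl_c_iter)
  apply (subst Cons_nth_drop_Suc[symmetric], assumption)
  apply (simp only: hd_c_Cons)
  done

lemma ev_prim_bd:
  assumes "eval_recf g xs (F 0)"
    and "\<And>n. n < N \<Longrightarrow> eval_recf h (n # F n # xs) (F (Suc n))"
    and "n \<le> N"
  shows "eval_recf (Prim g h) (n # xs) (F n)"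
  using assms(3)
proof (induction n)
  case 0 show ?case using assms(1) by (rule eval_recf.prim0)
next
  case (Suc n) then show ?case using assms(2)[of n] by (intro eval_recf.primS) auto
qed

definition "takeh_r = Prim Zero (Comp Succ [Comp pe_r [Comp nth_r [Comp sub_r [Comp Succ [Proj 0], Proj 2], Proj 3], Proj 1]])"
definition "take_r = Comp takeh_r [Proj 0, Proj 0, Proj 1]"

lemma ev_take: "k \<le> length s \<Longrightarrow> y = code_str (take k s) \<Longrightarrow> eval_recf take_r [k, code_str s] y"
  unfolding take_r_def
proof (hypsubst, rule ev_comp3, (rule ev_proj; simp)+)
  assume k: "k \<le> length s"
  let ?F = "\<lambda>j. code_str (drop (k - j) (take k s))"
  have "eval_recf takeh_r [k, k, code_str s] (?F k)"
    unfolding takeh_r_def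
  proof (rule ev_prim_bd[where N=k and F="\<lambda>j. code_str (drop (k - j) (take k s))"])
    show "eval_recf Zero [k, code_str s] (?F 0)" by (rule ev_zero) simp
    fix n assume n: "n < k"
    have e: "drop (k - Suc n) (take k s) = s ! (k - Suc n) # drop (k - n) (take k s)"
    proof -
      have l: "k - Suc n < length (take k s)" using n k by simp
      have "drop (k - Suc n) (take k s) = take k s ! (k - Suc n) # drop (Suc (k - Suc n)) (take k s)"
        by (rule Cons_nth_drop_Suc[symmetric, OF l])
      moreover have "Suc (k - Suc n) = k - n" using n by simp
      moreover have "take k s ! (k - Suc n) = s ! (k - Suc n)" using n by simp
      ultimately show ?thesis by simp
    qed
    show "eval_recf (Comp Succ [Comp pe_r [Comp nth_r [Comp sub_r [Comp Succ [Proj 0], Proj 2], Proj 3], Proj 1]])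
      [n, ?F n, k, code_str s] (?F (Suc n))"
      unfolding e code_str_Cons
      apply (rule ev_comp1[OF _ ev_succ[OF refl]])
      apply (rule ev_comp2[OF _ _ ev_pe[OF refl]])
        apply (rule ev_comp2[OF _ _ ev_nth])
          apply (rule ev_comp2[OF _ _ ev_sub[OF refl]])
            apply (rule ev_comp1[OF _ ev_succ[OF refl]])
            apply (rule ev_proj; simp)
           apply (rule ev_proj; simp)
          apply (rule ev_proj; simp)
      using n k apply simp
        apply simp
       apply (rule ev_proj; simp)
      done
  qed (simp add: k)
  then show "eval_recf takeh_r [k, k, code_str s] (code_str (take k s))" by simp
qed


lemma int_encode_eq: "int_encode i = (if 0 \<le> i then 2 * nat i else Suc (2 * nat (- i - 1)))"
  by (simp add: int_encode_def sum_encode_def)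

lemma code_rat_eq: "code_rat r = prod_encode (int_encode (fst (quotient_of r)), nat (snd (quotient_of r)))"
  by (simp add: code_rat_def)

lemma cond_rat:
  assumes q: "quotient_of r = (a, d)"
  shows "(real_of_rat r < real n) \<longleftrightarrow> (int_encode a < 2 * n * nat d \<or> odd (int_encode a))"
proof -
  have d: "d > 0" using quotient_of_denom_pos[OF q] .
  have r: "r = of_int a / of_int d" using quotient_of_div[OF q] .
  have "real_of_rat r = real_of_int a / real_of_int d" using r by (simp add: of_rat_divide)
  then have "(real_of_rat r < real n) \<longleftrightarrow> real_of_int a < real n * real_of_int d"
    using d by (simp add: divide_less_eq)
  also have "\<dots> \<longleftrightarrow> a < int n * d"
    by (metis of_int_less_iff of_int_mult of_int_of_nat_eq)
  finally have eq: "(real_of_rat r < real n) \<longleftrightarrow> a < int n * d" .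
  show ?thesis
  proof (cases "0 \<le> a")
    case True
    then have "int_encode a = 2 * nat a" by (simp add: int_encode_eq)
    moreover have "a < int n * d \<longleftrightarrow> 2 * nat a < 2 * n * nat d"
    proof -
      have 1: "int (2*nat a) = 2*a" using True by simp
      have 2: "int (2*n*nat d) = 2*(int n*d)" using d by simp
      have "2 * nat a < 2 * n * nat d \<longleftrightarrow> int (2*nat a) < int (2*n*nat d)" by (simp only: of_nat_less_iff)
      then show ?thesis unfolding 1 2 by simp
    qed
    ultimately show ?thesis using eq by simp
  next
    case False
    then have "odd (int_encode a)" by (simp add: int_encode_eq)
    moreover have "a < int n * d" using False d by (smt (verit) mult_nonneg_nonneg of_nat_0_le_iff)
    ultimately show ?thesis using eq by simp
  qed
qed


lemma ev_comp1_inv: "eval_recf (Comp f [g1]) xs y \<Longrightarrow> \<exists>y1. eval_recf g1 xs y1 \<and> eval_recf f [y1] y"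
  by (erule evCompE) (clarsimp simp: list_all2_Cons1, (intro exI conjI; assumption))
lemma ev_comp2_inv: "eval_recf (Comp f [g1, g2]) xs y \<Longrightarrow>
   \<exists>y1 y2. eval_recf g1 xs y1 \<and> eval_recf g2 xs y2 \<and> eval_recf f [y1, y2] y"
  by (erule evCompE) (clarsimp simp: list_all2_Cons1, (intro exI conjI; assumption))
lemma ev_comp3_inv: "eval_recf (Comp f [g1, g2, g3]) xs y \<Longrightarrow>
   \<exists>y1 y2 y3. eval_recf g1 xs y1 \<and> eval_recf g2 xs y2 \<and> eval_recf g3 xs y3 \<and> eval_recf f [y1, y2, y3] y"
  by (erule evCompE) (clarsimp simp: list_all2_Cons1, (intro exI conjI; assumption))

lemma ev_det_iff: "eval_recf g xs y \<Longrightarrow> eval_recf g xs y' \<longleftrightarrow> y' = y"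
  using eval_recf_det by auto

definition "par_r = Prim Zero (Comp nsg_r [Proj 1])"
lemma ev_par: "y = n mod 2 \<Longrightarrow> eval_recf par_r [n] y"
  unfolding par_r_def
  by (hypsubst, rule ev_prim[where F="\<lambda>n. n mod 2" and xs="[]"])
     (auto intro!: ev_zero ev_comp1 ev_nsg ev_proj simp: mod_Suc)

definition "nf p = Comp fst_r [Comp len_r [Proj p]]"
definition "kf p = Comp snd_r [Comp len_r [Proj p]]"
definition "tf p = Comp take_r [kf p, Proj p]"
definition "ef q = Comp fst_r [Proj q]"
definition "df q = Comp snd_r [Proj q]"

lemma ev_nf: "p < length xs \<Longrightarrow> xs ! p = code_str s \<Longrightarrow> y = fst (prod_decode (length s)) \<Longrightarrow> eval_recf (nf p) xs y"
  unfolding nf_def by (auto intro!: ev_comp1 ev_fst ev_len ev_proj)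
lemma ev_kf: "p < length xs \<Longrightarrow> xs ! p = code_str s \<Longrightarrow> y = snd (prod_decode (length s)) \<Longrightarrow> eval_recf (kf p) xs y"
  unfolding kf_def by (auto intro!: ev_comp1 ev_snd ev_len ev_proj)

lemma snd_pd_le: "snd (prod_decode z) \<le> z"
proof -
  obtain a b where ab: "prod_decode z = (a, b)" by fastforce
  have "z = triangle (a + b) + a" using prod_decode_tri[OF ab] .
  moreover have "m \<le> triangle m" for m by (induction m) (auto simp: triangle_Suc)
  then have "b \<le> triangle (a + b)" by (meson le_add2 order_trans)
  ultimately show ?thesis using ab by simp
qed

lemma ev_tf: "p < length xs \<Longrightarrow> xs ! p = code_str s \<Longrightarrow> y = code_str (take (snd (prod_decode (length s))) s) \<Longrightarrow> eval_recf (tf p) xs y"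
  unfolding tf_def
  by (rule ev_comp2, rule ev_kf, assumption+, rule refl, rule ev_proj, assumption, rule refl)
     (auto intro!: ev_take snd_pd_le)

lemma ev_ef: "q < length xs \<Longrightarrow> y = fst (prod_decode (xs ! q)) \<Longrightarrow> eval_recf (ef q) xs y"
  unfolding ef_def by (auto intro!: ev_comp1 ev_fst ev_proj)
lemma ev_df: "q < length xs \<Longrightarrow> y = snd (prod_decode (xs ! q)) \<Longrightarrow> eval_recf (df q) xs y"
  unfolding df_def by (auto intro!: ev_comp1 ev_snd ev_proj)

definition "cond_r q p = Comp sg_r [Comp add_r [Comp lt_r [ef q, Comp mult_r [Comp mult_r [constf 2, nf p], df q]], Comp par_r [ef q]]]"

definition cond_val :: "nat \<Rightarrow> bool list \<Rightarrow> nat" where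
  "cond_val c s = min ((if fst (prod_decode c) < 2 * fst (prod_decode (length s)) * snd (prod_decode c) then 1 else 0)
      + fst (prod_decode c) mod 2) 1"

lemma ev_cond: "q < length xs \<Longrightarrow> p < length xs \<Longrightarrow> xs ! p = code_str s \<Longrightarrow> y = cond_val (xs ! q) s
   \<Longrightarrow> eval_recf (cond_r q p) xs y"
  unfolding cond_r_def cond_val_def
  by (auto intro!: ev_comp1 ev_comp2 ev_sg ev_add ev_lt ev_ef ev_mult ev_const ev_nf ev_df ev_par)

lemma cond_val_iff: "cond_val (code_rat r) s = 1 \<longleftrightarrow> real_of_rat r < real (fst (prod_decode (length s)))"
proof -
  obtain a d where q: "quotient_of r = (a, d)" by fastforce
  show ?thesis
    unfolding cond_val_def code_rat_eq q cond_rat[OF q] by (auto simp: odd_iff_mod_2_eq_one)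
qed


definition "guard_r = Mini (Comp nsg_r [cond_r 1 2])"

lemma cond_val_le: "cond_val c s \<le> 1" by (simp add: cond_val_def)

lemma guard_iff: "(\<exists>y. eval_recf guard_r [c, code_str s] y) \<longleftrightarrow> cond_val c s = 1"
proof
  assume "\<exists>y. eval_recf guard_r [c, code_str s] y"
  then obtain y where "eval_recf guard_r [c, code_str s] y" by blast
  then have "eval_recf (Comp nsg_r [cond_r 1 2]) [y, c, code_str s] 0"
    unfolding guard_r_def by (auto elim: evMiniE)
  then obtain v where v: "eval_recf (cond_r 1 2) [y, c, code_str s] v" "eval_recf nsg_r [v] 0"
    by (metis ev_comp1_inv)
  have "v = cond_val c s" using v(1) ev_cond[of 1 "[y, c, code_str s]" 2 s "cond_val c s"] eval_recf_det by auto
  moreover have "0 = 1 - min v 1" using v(2) ev_nsg[OF refl, of v] eval_recf_det by blast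
  ultimately show "cond_val c s = 1" using cond_val_le[of c s] by linarith
next
  assume a: "cond_val c s = 1"
  have "eval_recf guard_r [c, code_str s] 0"
    unfolding guard_r_def
    by (rule ev_mini[where F="\<lambda>_. 0"]) (auto intro!: ev_comp1 ev_nsg ev_cond simp: a)
  then show "\<exists>y. eval_recf guard_r [c, code_str s] y" by blast
qed

definition "H_r f = Comp f [Comp mult_r [constf 2, nf 3], tf 3]"
definition "branch_r f = Comp (Prim Zero (H_r f)) [Comp sg_r [nf 1], Proj 0, Proj 1]"

lemma H_iff: "eval_recf (H_r f) [a, b, c, code_str s] y \<longleftrightarrow>
   eval_recf f [2 * fst (prod_decode (length s)), code_str (take (snd (prod_decode (length s))) s)] y"
proof
  assume "eval_recf (H_r f) [a, b, c, code_str s] y"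
  then obtain w1 w2 where w: "eval_recf (Comp mult_r [constf 2, nf 3]) [a, b, c, code_str s] w1"
     "eval_recf (tf 3) [a, b, c, code_str s] w2" "eval_recf f [w1, w2] y"
    using ev_comp2_inv[OF \<open>eval_recf (H_r f) [a, b, c, code_str s] y\<close>[unfolded H_r_def]] by blast
  have "w1 = 2 * fst (prod_decode (length s))"
  proof -
    have "eval_recf (Comp mult_r [constf 2, nf 3]) [a, b, c, code_str s] (2 * fst (prod_decode (length s)))"
      by (rule ev_comp2[OF ev_const ev_nf ev_mult]) auto
    then show ?thesis using eval_recf_det[OF w(1)] by simp
  qed
  moreover have "w2 = code_str (take (snd (prod_decode (length s))) s)"
  proof -
    have "eval_recf (tf 3) [a, b, c, code_str s] (code_str (take (snd (prod_decode (length s))) s))"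
      by (rule ev_tf) auto
    then show ?thesis using eval_recf_det[OF w(2)] by simp
  qed
  ultimately show "eval_recf f [2 * fst (prod_decode (length s)), code_str (take (snd (prod_decode (length s))) s)] y"
    using w(3) by simp
next
  assume "eval_recf f [2 * fst (prod_decode (length s)), code_str (take (snd (prod_decode (length s))) s)] y"
  then show "eval_recf (H_r f) [a, b, c, code_str s] y"
    unfolding H_r_def by (auto intro!: ev_comp2 ev_mult ev_const ev_nf ev_tf)
qed

lemma branch_iff: "(\<exists>y. eval_recf (branch_r f) [c, code_str s] y) \<longleftrightarrow>
   (fst (prod_decode (length s)) = 0 \<or>
    (\<exists>y. eval_recf f [2 * fst (prod_decode (length s)), code_str (take (snd (prod_decode (length s))) s)] y))"
  (is "?L \<longleftrightarrow> ?n = 0 \<or> ?R")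
proof -
  have e1: "eval_recf (Comp sg_r [nf 1]) [c, code_str s] (min ?n 1)"
    by (rule ev_comp1[OF ev_nf ev_sg]) auto
  show ?thesis
proof
  assume "?L"
  then obtain y where "eval_recf (branch_r f) [c, code_str s] y" by blast
  then have "\<exists>v1 v2 v3. eval_recf (Comp sg_r [nf 1]) [c, code_str s] v1 \<and>
     eval_recf (Proj 0) [c, code_str s] v2 \<and> eval_recf (Proj 1) [c, code_str s] v3 \<and>
     eval_recf (Prim Zero (H_r f)) [v1, v2, v3] y"
    unfolding branch_r_def by (rule ev_comp3_inv)
  then obtain v1 v2 v3 where v: "eval_recf (Comp sg_r [nf 1]) [c, code_str s] v1"
     "eval_recf (Proj 0) [c, code_str s] v2" "eval_recf (Proj 1) [c, code_str s] v3"
     "eval_recf (Prim Zero (H_r f)) [v1, v2, v3] y" by blast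
  have v1: "v1 = min ?n 1" using eval_recf_det[OF v(1) e1] .
  have v3: "v3 = code_str s" using v(3) by (auto elim: evProjE)
  show "?n = 0 \<or> ?R"
  proof (cases "?n = 0")
    case False
    then have "v1 = Suc 0" using v1 by simp
    then have "eval_recf (Prim Zero (H_r f)) (Suc 0 # [v2, v3]) y" using v(4) by simp
    then obtain r where "eval_recf (H_r f) [0, r, v2, v3] y"
      by (rule evPrimE) auto
    then show ?thesis unfolding v3 H_iff by auto
  qed simp
next
  assume a: "?n = 0 \<or> ?R"
  show "?L"
  proof (cases "?n = 0")
    case True
    have "eval_recf (branch_r f) [c, code_str s] 0"
      unfolding branch_r_def
      apply (rule ev_comp3[OF e1 ev_proj ev_proj])
         apply simp_all
      apply (simp only: True min_0L)
      apply (rule eval_recf.prim0, rule ev_zero, rule refl)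
      done
    then show ?thesis by blast
  next
    case False
    have m1: "min ?n 1 = Suc 0" using False by simp
    obtain y where y: "eval_recf f [2 * ?n, code_str (take (snd (prod_decode (length s))) s)] y" using a False by auto
    have "eval_recf (branch_r f) [c, code_str s] y"
      unfolding branch_r_def
      apply (rule ev_comp3[OF e1 ev_proj ev_proj])
         apply (simp, simp, simp, simp)
      apply (simp only: m1)
      apply (rule eval_recf.primS[where r=0])
       apply (rule eval_recf.prim0, rule ev_zero, rule refl)
      using y H_iff by auto
    then show ?thesis by blast
  qed
qed
qed

definition "B_r f = Comp Zero [guard_r, branch_r f]"

lemma B_iff: "(\<exists>y. eval_recf (B_r f) [c, code_str s] y) \<longleftrightarrow>
   cond_val c s = 1 \<and> (fst (prod_decode (length s)) = 0 \<or>
    (\<exists>y. eval_recf f [2 * fst (prod_decode (length s)), code_str (take (snd (prod_decode (length s))) s)] y))"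
proof -
  have "(\<exists>y. eval_recf (B_r f) [c, code_str s] y) \<longleftrightarrow>
     (\<exists>y. eval_recf guard_r [c, code_str s] y) \<and> (\<exists>y. eval_recf (branch_r f) [c, code_str s] y)"
  proof
    assume "\<exists>y. eval_recf (B_r f) [c, code_str s] y"
    then obtain y where "eval_recf (B_r f) [c, code_str s] y" by blast
    then show "(\<exists>y. eval_recf guard_r [c, code_str s] y) \<and> (\<exists>y. eval_recf (branch_r f) [c, code_str s] y)"
      unfolding B_r_def by (metis ev_comp2_inv)
  qed (auto simp: B_r_def intro!: ev_comp2 ev_zero)
  then show ?thesis using guard_iff branch_iff by simp
qed

lemma cond_val_iff': "cond_val (code_rat r) s = Suc 0 \<longleftrightarrow> real_of_rat r < real (fst (prod_decode (length s)))"
  using cond_val_iff by simp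

definition Bset :: "(nat \<times> bool list) set \<Rightarrow> (rat \<times> bool list) set" where
  "Bset A = {(r, s). real_of_rat r < real (fst (prod_decode (length s))) \<and>
     (fst (prod_decode (length s)) = 0 \<or> (2 * fst (prod_decode (length s)), take (snd (prod_decode (length s))) s) \<in> A)}"

lemma re_Bset: assumes "re_nat_str A" shows "re_rat_str (Bset A)"
proof -
  obtain f where f: "\<And>n s. (n, s) \<in> A \<longleftrightarrow> (\<exists>y. eval_recf f [n, code_str s] y)"
    using assms unfolding re_nat_str_def by blast
  show ?thesis unfolding re_rat_str_def
    by (rule exI[of _ "B_r f"]) (auto simp: B_iff Bset_def f cond_val_iff')
qed


definition "pow2_r = Prim (constf 1) (Comp add_r [Proj 1, Proj 1])"
lemma ev_pow2: "y = 2 ^ n \<Longrightarrow> eval_recf pow2_r [n] y"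
  unfolding pow2_r_def
  by (hypsubst, rule ev_prim[where F="\<lambda>n. 2 ^ n" and xs="[]"]) (auto intro!: ev_const ev_comp2 ev_add ev_proj)

lemma code_rat_pow2: "code_rat ((2::rat) ^ n) = prod_encode (2 * 2 ^ n, 1)"
proof -
  have "quotient_of (of_int (2 ^ n) :: rat) = (2 ^ n, 1)" by (rule quotient_of_rat_of_int)
  then have "quotient_of ((2::rat) ^ n) = (2 ^ n, 1)" by simp
  moreover have "int_encode (2 ^ n) = 2 * 2 ^ n"
    by (simp add: int_encode_eq nat_power_eq)
  ultimately show ?thesis by (simp add: code_rat_def)
qed

definition "cr2_r = Comp pe_r [Comp mult_r [constf 2, Comp pow2_r [Proj 0]], constf 1]"
lemma ev_cr2: "y = code_rat ((2::rat) ^ n) \<Longrightarrow> eval_recf cr2_r (n # xs) y"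
  unfolding cr2_r_def code_rat_pow2
  by (auto intro!: ev_comp2 ev_comp1 ev_pe ev_mult ev_const ev_pow2 ev_proj)

lemma re_pow2: assumes "re_rat_str B" shows "re_nat_str {(n, s). ((2::rat) ^ n, s) \<in> B}"
proof -
  obtain f where f: "\<And>r s. (r, s) \<in> B \<longleftrightarrow> (\<exists>y. eval_recf f [code_rat r, code_str s] y)"
    using assms unfolding re_rat_str_def by blast
  have "(\<exists>y. eval_recf (Comp f [cr2_r, Proj 1]) [n, code_str s] y) \<longleftrightarrow> (\<exists>y. eval_recf f [code_rat ((2::rat) ^ n), code_str s] y)" for n s
  proof
    assume "\<exists>y. eval_recf (Comp f [cr2_r, Proj 1]) [n, code_str s] y"
    then obtain y where "eval_recf (Comp f [cr2_r, Proj 1]) [n, code_str s] y" by blast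
    then obtain v1 v2 where v: "eval_recf cr2_r [n, code_str s] v1" "eval_recf (Proj 1) [n, code_str s] v2" "eval_recf f [v1, v2] y"
      by (metis ev_comp2_inv)
    have "v1 = code_rat ((2::rat) ^ n)" using v(1) ev_cr2[OF refl, of n "[code_str s]"] eval_recf_det by blast
    moreover have "v2 = code_str s" using v(2) by (auto elim: evProjE)
    ultimately show "\<exists>y. eval_recf f [code_rat ((2::rat) ^ n), code_str s] y" using v(3) by blast
  next
    assume "\<exists>y. eval_recf f [code_rat ((2::rat) ^ n), code_str s] y"
    then show "\<exists>y. eval_recf (Comp f [cr2_r, Proj 1]) [n, code_str s] y"
      by (auto intro!: ev_comp2 ev_cr2 ev_proj)
  qed
  then show ?thesis unfolding re_nat_str_def using f by (intro exI[of _ "Comp f [cr2_r, Proj 1]"]) auto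
qed


lemma length_prefix[simp]: "length (prefix \<omega> n) = n"
  by (simp add: prefix_def)
lemma prefix_0[simp]: "prefix \<omega> 0 = []"
  by (simp add: prefix_def)
lemma prefix_Suc: "prefix \<omega> (Suc n) = prefix \<omega> n @ [\<omega> n]"
  by (simp add: prefix_def)
lemma take_prefix[simp]: "take k (prefix \<omega> n) = prefix \<omega> (min k n)"
  by (simp add: prefix_def take_map take_upt min_def)
lemma nth_prefix[simp]: "i < n \<Longrightarrow> prefix \<omega> n ! i = \<omega> i"
  by (simp add: prefix_def)

lemma in_cyl: "\<omega> \<in> cyl s \<longleftrightarrow> prefix \<omega> (length s) = s"
  by (simp add: cyl_def)

lemma cyl_Nil[simp]: "cyl [] = UNIV"
  by (simp add: cyl_def)

lemma prefix_eq_iff: "prefix \<omega> (length s) = s \<longleftrightarrow> (\<forall>i<length s. \<omega> i = s ! i)"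
  unfolding prefix_def list_eq_iff_nth_eq by simp

lemma cyl_eq: "cyl s = (\<Inter>i\<in>{..<length s}. {\<omega>. \<omega> i = s ! i})"
  unfolding cyl_def prefix_eq_iff by auto

lemma space_cantor[simp]: "space cantor = UNIV"
  by (simp add: cantor_def space_PiM)

lemma coord_meas: "(\<lambda>\<omega>. \<omega> i) \<in> measurable cantor (count_space UNIV)"
  unfolding cantor_def by (rule measurable_component_singleton) simp

lemma sets_coord: "{\<omega>. \<omega> i = b} \<in> sets cantor"
proof -
  have "(\<lambda>\<omega>. \<omega> i) -` {b} \<inter> space cantor \<in> sets cantor"
    by (rule measurable_sets[OF coord_meas]) simp
  then show ?thesis by (simp add: vimage_def)
qed

lemma sets_cyl[measurable, simp]: "cyl s \<in> sets cantor"
proof (cases "s = []")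
  case True then show ?thesis using sets.top[of cantor] by simp
next
  case False
  then show ?thesis unfolding cyl_eq by (intro sets.finite_INT) (auto intro: sets_coord)
qed

lemma sets_cyl_union[measurable, simp]: "cyl_union A \<in> sets cantor"
  unfolding cyl_union_def by (intro sets.countable_UN') auto

lemma prefix_meas: "(\<lambda>\<omega>. prefix \<omega> n) \<in> measurable cantor (count_space UNIV)"
proof (subst measurable_count_space_eq2_countable, safe)
  fix s :: "bool list"
  have "(\<lambda>\<omega>. prefix \<omega> n) -` {s} = (if length s = n then cyl s else {})"
    by (auto simp: cyl_def)
  then show "(\<lambda>\<omega>. prefix \<omega> n) -` {s} \<inter> space cantor \<in> sets cantor" by simp
qed simp

lemma cyl_snoc: "cyl s = cyl (s @ [True]) \<union> cyl (s @ [False])"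
  by (auto simp: cyl_def prefix_Suc)

lemma cyl_snoc_disj: "cyl (s @ [True]) \<inter> cyl (s @ [False]) = {}"
  by (auto simp: cyl_def prefix_Suc)


definition Pw :: "(bool list \<Rightarrow> real) \<Rightarrow> bool list \<Rightarrow> real" where
  "Pw \<psi> s = (\<Prod>k<length s. if s ! k then \<psi> (take k s) else 1 - \<psi> (take k s))"

lemma Pw_Nil[simp]: "Pw \<psi> [] = 1" by (simp add: Pw_def)

lemma Pw_snoc: "Pw \<psi> (s @ [b]) = Pw \<psi> s * (if b then \<psi> s else 1 - \<psi> s)"
proof -
  have "(\<Prod>k<length s. if (s @ [b]) ! k then \<psi> (take k (s @ [b])) else 1 - \<psi> (take k (s @ [b])))
     = (\<Prod>k<length s. if s ! k then \<psi> (take k s) else 1 - \<psi> (take k s))"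
    by (rule prod.cong) (auto simp: nth_append)
  then show ?thesis unfolding Pw_def by (simp add: prod.lessThan_Suc)
qed

lemma Pw_nonneg: "precise_fs \<psi> \<Longrightarrow> 0 \<le> Pw \<psi> s"
  unfolding Pw_def precise_fs_def by (intro prod_nonneg) auto

lemma is_mu_cyl: "is_mu_of \<psi> \<mu> \<Longrightarrow> measure \<mu> (cyl s) = Pw \<psi> s"
  by (simp add: is_mu_of_def Pw_def)

lemma is_mu_prob: "is_mu_of \<psi> \<mu> \<Longrightarrow> prob_space \<mu>"
  by (simp add: is_mu_of_def borel_prob_def)

lemma is_mu_sets: "is_mu_of \<psi> \<mu> \<Longrightarrow> sets \<mu> = sets cantor"
  by (simp add: is_mu_of_def borel_prob_def)

lemma interval01_obtain:
  assumes "interval01 I" obtains a b where "0 \<le> a" "a \<le> b" "b \<le> 1" "I = {a..b}"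
  using assms unfolding interval01_def by blast

lemma upper_exp_ge:
  assumes "interval01 I" "p \<in> I"
  shows "p * f True + (1 - p) * f False \<le> upper_exp I f"
proof -
  obtain a b where ab: "0 \<le> a" "a \<le> b" "b \<le> 1" "I = {a..b}" using assms(1) by (rule interval01_obtain)
  have "bdd_above ((\<lambda>p. p * f True + (1 - p) * f False) ` I)"
  proof (rule bdd_aboveI)
    fix x assume "x \<in> (\<lambda>p. p * f True + (1 - p) * f False) ` I"
    then obtain q where q: "q \<in> I" "x = q * f True + (1 - q) * f False" by blast
    have "0 \<le> q" "q \<le> 1" using q ab by auto
    have h: "r * z \<le> \<bar>z\<bar>" if "0 \<le> r" "r \<le> 1" for r z :: real
    proof -
      have "r * z \<le> r * \<bar>z\<bar>" using that by (intro mult_left_mono) auto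
      also have "\<dots> \<le> \<bar>z\<bar>" using that by (intro mult_left_le_one_le) auto
      finally show ?thesis .
    qed
    have "q * f True \<le> \<bar>f True\<bar>" "(1 - q) * f False \<le> \<bar>f False\<bar>"
      using h \<open>0 \<le> q\<close> \<open>q \<le> 1\<close> by auto
    then show "x \<le> \<bar>f True\<bar> + \<bar>f False\<bar>" using q by linarith
  qed
  then show ?thesis unfolding upper_exp_def using assms(2) by (rule cSUP_upper2) simp
qed

lemma upper_exp_le:
  assumes "interval01 I" "\<And>p. p \<in> I \<Longrightarrow> p * f True + (1 - p) * f False \<le> c"
  shows "upper_exp I f \<le> c"
proof -
  obtain a b where ab: "0 \<le> a" "a \<le> b" "b \<le> 1" "I = {a..b}" using assms(1) by (rule interval01_obtain)
  then have "I \<noteq> {}" by auto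
  then show ?thesis unfolding upper_exp_def using assms(2) by (intro cSUP_least) auto
qed

lemma affine_le_max:
  fixes a b p x y :: real
  assumes "a \<le> p" "p \<le> b"
  shows "p * x + (1 - p) * y \<le> max (a * x + (1 - a) * y) (b * x + (1 - b) * y)"
proof (cases "x \<le> y")
  case True
  have "p * (x - y) \<le> a * (x - y)" using assms True by (intro mult_right_mono_neg) auto
  then show ?thesis by (simp add: algebra_simps)
next
  case False
  have "p * (x - y) \<le> b * (x - y)" using assms False by (intro mult_right_mono) auto
  then show ?thesis by (simp add: algebra_simps)
qed

lemma upper_exp_interval:
  assumes "0 \<le> a" "a \<le> b" "b \<le> 1"
  shows "upper_exp {a..b} f = max (a * f True + (1 - a) * f False) (b * f True + (1 - b) * f False)"
proof (rule antisym)
  have i: "interval01 {a..b}" using assms unfolding interval01_def by blast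
  show "upper_exp {a..b} f \<le> max (a * f True + (1 - a) * f False) (b * f True + (1 - b) * f False)"
    by (rule upper_exp_le[OF i]) (intro affine_le_max; auto)
  show "max (a * f True + (1 - a) * f False) (b * f True + (1 - b) * f False) \<le> upper_exp {a..b} f"
    using upper_exp_ge[OF i, of a f] upper_exp_ge[OF i, of b f] assms by auto
qed


lemma fs_interval: "forecasting_system \<phi> \<Longrightarrow> interval01 (\<phi> s)"
  by (simp add: forecasting_system_def)

lemma fs_nonempty: "forecasting_system \<phi> \<Longrightarrow> \<exists>p. p \<in> \<phi> s"
  using fs_interval[of \<phi> s] by (auto elim!: interval01_obtain)

lemma super_child:
  assumes fs: "forecasting_system \<phi>" and sm: "supermartingale \<phi> M"
  shows "\<exists>b. M (t @ [b]) \<le> M t"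
proof (rule ccontr)
  assume "\<not> ?thesis"
  then have g: "M t < M (t @ [True])" "M t < M (t @ [False])" by (auto simp: not_le)
  obtain p where p: "p \<in> \<phi> t" using fs_nonempty[OF fs] by blast
  obtain a b where ab: "0 \<le> a" "a \<le> b" "b \<le> 1" "\<phi> t = {a..b}"
    using fs_interval[OF fs] by (rule interval01_obtain)
  have p01: "0 \<le> p" "p \<le> 1" using p ab by auto
  have "M t = p * M t + (1 - p) * M t" by (simp add: algebra_simps)
  also have "\<dots> < p * M (t @ [True]) + (1 - p) * M (t @ [False])"
  proof (cases "p = 0")
    case True then show ?thesis using g by simp
  next
    case False
    then have "p * M t < p * M (t @ [True])" using g p01 by (intro mult_strict_left_mono) auto
    moreover have "(1 - p) * M t \<le> (1 - p) * M (t @ [False])" using g p01 by (intro mult_left_mono) auto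
    ultimately show ?thesis by linarith
  qed
  also have "\<dots> \<le> upper_exp (\<phi> t) (\<lambda>b. M (t @ [b]))"
    using upper_exp_ge[OF fs_interval[OF fs] p, of "\<lambda>b. M (t @ [b])"] by simp
  also have "\<dots> \<le> M t" using sm by (simp add: supermartingale_def)
  finally show False by simp
qed

lemma super_nonneg:
  assumes fs: "forecasting_system \<phi>" and sm: "supermartingale \<phi> M"
    and lim: "\<And>\<omega>. ereal (indicator G \<omega>) \<le> liminf (\<lambda>n. ereal (M (prefix \<omega> n)))"
  shows "0 \<le> M s"
proof (rule ccontr)
  assume neg: "\<not> 0 \<le> M s"
  define nx where "nx t = (SOME t'. \<exists>b. t' = t @ [b] \<and> M t' \<le> M t)" for t
  have nx: "\<exists>b. nx t = t @ [b]" "M (nx t) \<le> M t" for t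
  proof -
    have "\<exists>t'. \<exists>b. t' = t @ [b] \<and> M t' \<le> M t" using super_child[OF fs sm, of t] by blast
    then have "\<exists>b. nx t = t @ [b] \<and> M (nx t) \<le> M t" unfolding nx_def by (rule someI_ex)
    then show "\<exists>b. nx t = t @ [b]" "M (nx t) \<le> M t" by auto
  qed
  define sq where "sq k = (nx ^^ k) s" for k
  have sq_Suc: "\<exists>b. sq (Suc k) = sq k @ [b]" for k using nx(1) by (simp add: sq_def)
  have len: "length (sq k) = length s + k" for k
  proof (induction k)
    case (Suc k)
    obtain b where "sq (Suc k) = sq k @ [b]" using sq_Suc by blast
    then show ?case using Suc by simp
  qed (simp add: sq_def)
  have Ms: "M (sq k) \<le> M s" for k
    by (induction k) (use nx(2) order_trans in \<open>auto simp: sq_def\<close>)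
  have pre: "k \<le> m \<Longrightarrow> \<exists>u. sq m = sq k @ u" for k m
  proof (induction m)
    case 0 then show ?case by simp
  next
    case (Suc m)
    show ?case
    proof (cases "k = Suc m")
      case False
      then obtain u where "sq m = sq k @ u" using Suc by auto
      moreover obtain b where "sq (Suc m) = sq m @ [b]" using sq_Suc by blast
      ultimately show ?thesis by auto
    qed simp
  qed
  have nth_eq: "i < length (sq k) \<Longrightarrow> k \<le> m \<Longrightarrow> sq m ! i = sq k ! i" for i k m
    using pre[of k m] by (auto simp: nth_append)
  define \<omega> where "\<omega> i = sq (Suc i) ! i" for i
  have pw: "prefix \<omega> (length s + k) = sq k" for k
  proof (rule nth_equalityI)
    show "length (prefix \<omega> (length s + k)) = length (sq k)" by (simp add: len)
    fix i assume "i < length (prefix \<omega> (length s + k))"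
    then have i: "i < length s + k" by simp
    have "\<omega> i = sq (max k (Suc i)) ! i" unfolding \<omega>_def by (rule nth_eq[symmetric]) (auto simp: len)
    also have "\<dots> = sq k ! i" by (rule nth_eq) (use i in \<open>auto simp: len\<close>)
    finally show "prefix \<omega> (length s + k) ! i = sq k ! i" using i by simp
  qed
  have "ereal (M s) < ereal (indicator G \<omega>)" using neg by (simp add: indicator_def)
  then have "ereal (M s) < liminf (\<lambda>n. ereal (M (prefix \<omega> n)))" using lim[of \<omega>] by (rule less_le_trans)
  then have "eventually (\<lambda>n. ereal (M s) < ereal (M (prefix \<omega> n))) sequentially"
    using le_Liminf_iff by (metis less_le_trans order_refl less_imp_le dual_order.strict_trans2)
  then obtain N where N: "\<And>n. n \<ge> N \<Longrightarrow> M s < M (prefix \<omega> n)" by (auto simp: eventually_sequentially)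
  have "M s < M (prefix \<omega> (length s + N))" using N by simp
  then show False using Ms[of N] pw[of N] by simp
qed


lemma finite_len: "finite {u :: bool list. length u = n}"
proof -
  have "{u :: bool list. length u = n} = {xs. set xs \<subseteq> UNIV \<and> length xs = n}" by simp
  then show ?thesis using finite_lists_length_eq[of "UNIV :: bool set" n] by simp
qed

lemma len_Suc_image: "{u :: bool list. length u = Suc j} = (\<lambda>(b, u). b # u) ` (UNIV \<times> {u. length u = j})"
  by (auto simp: length_Suc_conv image_iff)

lemma sum_len_Suc:
  fixes g :: "bool list \<Rightarrow> real"
  shows "(\<Sum>u\<in>{u. length u = Suc j}. g u) = (\<Sum>u\<in>{u. length u = j}. g (True # u)) + (\<Sum>u\<in>{u. length u = j}. g (False # u))"
proof -
  have inj: "inj_on (\<lambda>(b, u). b # u) (UNIV \<times> {u :: bool list. length u = j})"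
    by (auto simp: inj_on_def)
  have "(\<Sum>u\<in>{u. length u = Suc j}. g u) = (\<Sum>x\<in>UNIV \<times> {u. length u = j}. g ((\<lambda>(b, u). b # u) x))"
    unfolding len_Suc_image by (rule sum.reindex[OF inj, unfolded comp_def])
  also have "\<dots> = (\<Sum>b\<in>UNIV. \<Sum>u\<in>{u. length u = j}. g (b # u))"
    by (subst sum.cartesian_product) (simp add: case_prod_beta)
  also have "\<dots> = (\<Sum>u\<in>{u. length u = j}. g (True # u)) + (\<Sum>u\<in>{u. length u = j}. g (False # u))"
    by (simp add: UNIV_bool)
  finally show ?thesis .
qed

lemma super_sum:
  assumes fs: "forecasting_system \<phi>" and sm: "supermartingale \<phi> M"
    and pr: "precise_fs \<psi>" and inphi: "\<And>s. \<psi> s \<in> \<phi> s"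
  shows "(\<Sum>u\<in>{u. length u = j}. M (s @ u) * Pw \<psi> (s @ u)) \<le> M s * Pw \<psi> s"
proof (induction j arbitrary: s)
  case 0
  have "{u :: bool list. length u = 0} = {[]}" by auto
  then show ?case by simp
next
  case (Suc j)
  have "(\<Sum>u\<in>{u. length u = Suc j}. M (s @ u) * Pw \<psi> (s @ u))
     = (\<Sum>u\<in>{u. length u = j}. M ((s @ [True]) @ u) * Pw \<psi> ((s @ [True]) @ u))
       + (\<Sum>u\<in>{u. length u = j}. M ((s @ [False]) @ u) * Pw \<psi> ((s @ [False]) @ u))"
    by (subst sum_len_Suc) simp
  also have "\<dots> \<le> M (s @ [True]) * Pw \<psi> (s @ [True]) + M (s @ [False]) * Pw \<psi> (s @ [False])"
    using Suc.IH[of "s @ [True]"] Suc.IH[of "s @ [False]"] by linarith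
  also have "\<dots> = Pw \<psi> s * (\<psi> s * M (s @ [True]) + (1 - \<psi> s) * M (s @ [False]))"
    by (simp add: Pw_snoc algebra_simps)
  also have "\<dots> \<le> Pw \<psi> s * M s"
  proof (rule mult_left_mono)
    have "\<psi> s * M (s @ [True]) + (1 - \<psi> s) * M (s @ [False]) \<le> upper_exp (\<phi> s) (\<lambda>b. M (s @ [b]))"
      using upper_exp_ge[OF fs_interval[OF fs] inphi, of s "\<lambda>b. M (s @ [b])"] by simp
    also have "\<dots> \<le> M s" using sm by (simp add: supermartingale_def)
    finally show "\<psi> s * M (s @ [True]) + (1 - \<psi> s) * M (s @ [False]) \<le> M s" .
  qed (rule Pw_nonneg[OF pr])
  finally show ?case by (simp add: mult.commute)
qed

lemma prefix_sum_indicator: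
  fixes f :: "bool list \<Rightarrow> ennreal"
  shows "(\<Sum>u\<in>{u. length u = n}. f u * indicator (cyl u) \<omega>) = f (prefix \<omega> n)"
proof -
  have "(\<Sum>u\<in>{u. length u = n}. f u * indicator (cyl u) \<omega>) = (\<Sum>u\<in>{u. length u = n}. if u = prefix \<omega> n then f u else 0)"
    by (rule sum.cong) (auto simp: indicator_def in_cyl)
  also have "\<dots> = f (prefix \<omega> n)" by (simp add: sum.delta' finite_len)
  finally show ?thesis .
qed

lemma mu_le_M:
  assumes fs: "forecasting_system \<phi>" and sm: "supermartingale \<phi> M"
    and pr: "precise_fs \<psi>" and inphi: "\<And>s. \<psi> s \<in> \<phi> s" and mu: "is_mu_of \<psi> \<mu>"
    and lim: "\<And>\<omega>. ereal (indicator G \<omega>) \<le> liminf (\<lambda>n. ereal (M (prefix \<omega> n)))"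
    and G: "G \<in> sets cantor"
  shows "measure \<mu> G \<le> M []"
proof -
  interpret prob_space \<mu> using is_mu_prob[OF mu] .
  have sets: "sets \<mu> = sets cantor" using is_mu_sets[OF mu] .
  have Mnn: "0 \<le> M s" for s by (rule super_nonneg[OF fs sm lim])
  define u where "u n \<omega> = ennreal (M (prefix \<omega> n))" for n \<omega>
  have u_meas: "u n \<in> borel_measurable \<mu>" for n
  proof -
    have "(\<lambda>\<omega>. prefix \<omega> n) \<in> measurable \<mu> (count_space UNIV)"
      unfolding measurable_cong_sets[OF sets refl] by (rule prefix_meas)
    then show ?thesis unfolding u_def using measurable_compose[of _ \<mu> "count_space UNIV" "\<lambda>s. ennreal (M s)" borel] by simp
  qed
  have int_u: "(\<integral>\<^sup>+ \<omega>. u n \<omega> \<partial>\<mu>) \<le> ennreal (M [])" for n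
  proof -
    have "(\<integral>\<^sup>+ \<omega>. u n \<omega> \<partial>\<mu>) = (\<integral>\<^sup>+ \<omega>. (\<Sum>v\<in>{v. length v = n}. ennreal (M v) * indicator (cyl v) \<omega>) \<partial>\<mu>)"
      unfolding u_def using prefix_sum_indicator[of "\<lambda>v. ennreal (M v)"] by simp
    also have "\<dots> = (\<Sum>v\<in>{v. length v = n}. \<integral>\<^sup>+ \<omega>. ennreal (M v) * indicator (cyl v) \<omega> \<partial>\<mu>)"
      by (rule nn_integral_sum) (use sets in \<open>auto\<close>)
    also have "\<dots> = (\<Sum>v\<in>{v. length v = n}. ennreal (M v) * emeasure \<mu> (cyl v))"
      by (rule sum.cong[OF refl], rule nn_integral_cmult_indicator) (simp add: sets)
    also have "\<dots> = (\<Sum>v\<in>{v. length v = n}. ennreal (M v * Pw \<psi> v))"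
      by (rule sum.cong[OF refl]) (simp add: emeasure_eq_measure is_mu_cyl[OF mu] ennreal_mult Mnn Pw_nonneg[OF pr])
    also have "\<dots> = ennreal (\<Sum>v\<in>{v. length v = n}. M v * Pw \<psi> v)"
      by (rule sum_ennreal) (simp add: Mnn Pw_nonneg[OF pr])
    also have "\<dots> \<le> ennreal (M [])"
      using super_sum[OF fs sm pr inphi, where j=n and s="[]"] by (simp add: ennreal_leI)
    finally show ?thesis .
  qed
  have pt: "indicator G \<omega> \<le> liminf (\<lambda>n. u n \<omega>)" for \<omega>
  proof (cases "\<omega> \<in> G")
    case False then show ?thesis by simp
  next
    case True
    have l1: "ereal 1 \<le> liminf (\<lambda>n. ereal (M (prefix \<omega> n)))" using lim[of \<omega>] True by simp
    show ?thesis unfolding le_Liminf_iff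
    proof (intro allI impI)
      fix y :: ennreal assume y: "y < indicator G \<omega>"
      then have "y < 1" using True by simp
      then obtain t where t: "y = ennreal t" "0 \<le> t" "t < 1"
        by (metis ennreal_cases ennreal_less_one_iff less_le_trans not_le top.extremum top_greatest ennreal_less_top)
      have "eventually (\<lambda>n. ereal t < ereal (M (prefix \<omega> n))) sequentially"
        using l1 unfolding le_Liminf_iff using t(3) by (metis ereal_less(1) less_ereal.simps(1))
      then show "eventually (\<lambda>n. y < u n \<omega>) sequentially"
        by eventually_elim (use t in \<open>auto simp: u_def ennreal_lessI\<close>)
    qed
  qed
  have "emeasure \<mu> G = (\<integral>\<^sup>+ \<omega>. indicator G \<omega> \<partial>\<mu>)" using G sets by simp
  also have "\<dots> \<le> (\<integral>\<^sup>+ \<omega>. liminf (\<lambda>n. u n \<omega>) \<partial>\<mu>)" by (rule nn_integral_mono) (rule pt)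
  also have "\<dots> \<le> liminf (\<lambda>n. \<integral>\<^sup>+ \<omega>. u n \<omega> \<partial>\<mu>)" by (rule nn_integral_liminf) (rule u_meas)
  also have "\<dots> \<le> limsup (\<lambda>n. \<integral>\<^sup>+ \<omega>. u n \<omega> \<partial>\<mu>)" by (rule Liminf_le_Limsup) simp
  also have "\<dots> \<le> ennreal (M [])" by (rule Limsup_bounded) (simp add: int_u)
  finally have "emeasure \<mu> G \<le> ennreal (M [])" .
  then show ?thesis using Mnn[of "[]"] by (simp add: emeasure_eq_measure)
qed

lemma mu_le_upper:
  assumes fs: "forecasting_system \<phi>" and pr: "precise_fs \<psi>" and inphi: "\<And>s. \<psi> s \<in> \<phi> s"
    and mu: "is_mu_of \<psi> \<mu>" and G: "G \<in> sets cantor" and up: "upper_prob \<phi> G \<le> ereal c"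
  shows "measure \<mu> G \<le> c"
proof (rule ccontr)
  assume "\<not> measure \<mu> G \<le> c"
  then have "upper_prob \<phi> G < ereal (measure \<mu> G)" using up by (simp add: not_le le_less_trans)
  then obtain M where M: "supermartingale \<phi> M" "\<And>\<omega>. ereal (indicator G \<omega>) \<le> liminf (\<lambda>n. ereal (M (prefix \<omega> n)))"
    "ereal (M []) < ereal (measure \<mu> G)"
    unfolding upper_prob_def INF_less_iff by auto
  have "measure \<mu> G \<le> M []" by (rule mu_le_M[OF fs M(1) pr inphi mu M(2) G])
  then show False using M(3) by simp
qed


fun ivr :: "(bool list \<Rightarrow> real) \<Rightarrow> bool list \<Rightarrow> real \<times> real" where
  "ivr \<psi> [] = (0, 1)"
| "ivr \<psi> (b # r) = (let lh = ivr \<psi> r; c = fst lh + (1 - \<psi> (rev r)) * (snd lh - fst lh)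
      in if b then (c, snd lh) else (fst lh, c))"

definition iv :: "(bool list \<Rightarrow> real) \<Rightarrow> bool list \<Rightarrow> real \<times> real" where
  "iv \<psi> s = ivr \<psi> (rev s)"

definition cut :: "(bool list \<Rightarrow> real) \<Rightarrow> bool list \<Rightarrow> real" where
  "cut \<psi> s = fst (iv \<psi> s) + (1 - \<psi> s) * (snd (iv \<psi> s) - fst (iv \<psi> s))"

lemma iv_Nil[simp]: "iv \<psi> [] = (0, 1)" by (simp add: iv_def)

lemma iv_snoc: "iv \<psi> (s @ [b]) = (if b then (cut \<psi> s, snd (iv \<psi> s)) else (fst (iv \<psi> s), cut \<psi> s))"
  by (simp add: iv_def cut_def Let_def)

lemma iv_inv:
  assumes "precise_fs \<psi>"
  shows "0 \<le> fst (iv \<psi> s) \<and> fst (iv \<psi> s) \<le> snd (iv \<psi> s) \<and> snd (iv \<psi> s) \<le> 1 \<and>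
         snd (iv \<psi> s) - fst (iv \<psi> s) = Pw \<psi> s"
proof (induction s rule: rev_induct)
  case Nil then show ?case by simp
next
  case (snoc b s)
  have p: "0 \<le> \<psi> s" "\<psi> s \<le> 1" using assms by (auto simp: precise_fs_def)
  let ?l = "fst (iv \<psi> s)" and ?h = "snd (iv \<psi> s)"
  have c1: "?l \<le> cut \<psi> s" unfolding cut_def using snoc p by simp
  have c2: "cut \<psi> s \<le> ?h"
  proof -
    have "(1 - \<psi> s) * (?h - ?l) \<le> 1 * (?h - ?l)" using snoc p by (intro mult_right_mono) auto
    then show ?thesis unfolding cut_def by simp
  qed
  show ?case
  proof (cases b)
    case True
    then show ?thesis using snoc c1 c2 by (simp add: iv_snoc Pw_snoc cut_def algebra_simps)
  next
    case False
    then show ?thesis using snoc c1 c2 by (simp add: iv_snoc Pw_snoc cut_def algebra_simps)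
  qed
qed

lemma cut_bounds:
  assumes "precise_fs \<psi>"
  shows "fst (iv \<psi> s) \<le> cut \<psi> s" "cut \<psi> s \<le> snd (iv \<psi> s)"
proof -
  have p: "0 \<le> \<psi> s" "\<psi> s \<le> 1" using assms by (auto simp: precise_fs_def)
  have i: "fst (iv \<psi> s) \<le> snd (iv \<psi> s)" using iv_inv[OF assms, of s] by simp
  show "fst (iv \<psi> s) \<le> cut \<psi> s" unfolding cut_def using i p by simp
  have "(1 - \<psi> s) * (snd (iv \<psi> s) - fst (iv \<psi> s)) \<le> 1 * (snd (iv \<psi> s) - fst (iv \<psi> s))"
    using i p by (intro mult_right_mono) auto
  then show "cut \<psi> s \<le> snd (iv \<psi> s)" unfolding cut_def by simp
qed

primrec pre :: "(bool list \<Rightarrow> real) \<Rightarrow> real \<Rightarrow> nat \<Rightarrow> bool list" where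
  "pre \<psi> x 0 = []"
| "pre \<psi> x (Suc n) = pre \<psi> x n @ [cut \<psi> (pre \<psi> x n) \<le> x]"

lemma length_pre[simp]: "length (pre \<psi> x n) = n"
  by (induction n) auto

lemma pre_iff:
  assumes pr: "precise_fs \<psi>" and x: "0 \<le> x" "x < 1"
  shows "pre \<psi> x n = s \<longleftrightarrow> (length s = n \<and> fst (iv \<psi> s) \<le> x \<and> x < snd (iv \<psi> s))"
proof (induction n arbitrary: s)
  case 0 then show ?case using x by auto
next
  case (Suc n)
  show ?case
  proof
    assume s: "pre \<psi> x (Suc n) = s"
    let ?t = "pre \<psi> x n"
    have t: "fst (iv \<psi> ?t) \<le> x" "x < snd (iv \<psi> ?t)" using Suc.IH[of ?t] by auto
    show "length s = Suc n \<and> fst (iv \<psi> s) \<le> x \<and> x < snd (iv \<psi> s)"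
      using s t by (auto simp: iv_snoc not_le)
  next
    assume a: "length s = Suc n \<and> fst (iv \<psi> s) \<le> x \<and> x < snd (iv \<psi> s)"
    then obtain t b where tb: "s = t @ [b]" by (metis length_Suc_conv_rev)
    have lt: "length t = n" using a tb by simp
    have cb: "fst (iv \<psi> t) \<le> cut \<psi> t" "cut \<psi> t \<le> snd (iv \<psi> t)" using cut_bounds[OF pr] by auto
    have tin: "fst (iv \<psi> t) \<le> x \<and> x < snd (iv \<psi> t)"
      using a cb unfolding tb by (cases b) (auto simp: iv_snoc)
    have pt: "pre \<psi> x n = t" using Suc.IH[of t] lt tin by simp
    have "(cut \<psi> t \<le> x) = b" using a unfolding tb by (cases b) (auto simp: iv_snoc)
    then show "pre \<psi> x (Suc n) = s" using pt tb by simp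
  qed
qed

definition Xpath :: "(bool list \<Rightarrow> real) \<Rightarrow> real \<Rightarrow> nat \<Rightarrow> bool" where
  "Xpath \<psi> x i = pre \<psi> x (Suc i) ! i"

lemma prefix_Xpath: "prefix (Xpath \<psi> x) n = pre \<psi> x n"
  by (induction n) (simp_all add: prefix_Suc Xpath_def nth_append)

lemma pre_meas: "(\<lambda>x. pre \<psi> x n) \<in> measurable borel (count_space UNIV)"
proof (induction n)
  case 0 then show ?case by simp
next
  case (Suc n)
  have "(\<lambda>x. (\<lambda>t x. t @ [cut \<psi> t \<le> x]) (pre \<psi> x n) x) \<in> measurable borel (count_space UNIV)"
  proof (rule measurable_compose_countable'[OF _ Suc.IH])
    fix t :: "bool list"
    have "(\<lambda>x. if cut \<psi> t \<le> x then t @ [True] else t @ [False]) \<in> measurable borel (count_space UNIV)"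
      by (rule measurable_If) auto
    moreover have "(\<lambda>x. t @ [cut \<psi> t \<le> x]) = (\<lambda>x. if cut \<psi> t \<le> x then t @ [True] else t @ [False])"
      by auto
    ultimately show "(\<lambda>x. t @ [cut \<psi> t \<le> x]) \<in> measurable borel (count_space UNIV)" by simp
  qed simp
  then show ?case by simp
qed

lemma Xpath_meas: "Xpath \<psi> \<in> measurable borel cantor"
proof -
  have "(\<lambda>x i. Xpath \<psi> x i) \<in> measurable borel cantor"
    unfolding cantor_def
  proof (rule measurable_PiM_single')
    fix i :: nat
    show "(\<lambda>x. Xpath \<psi> x i) \<in> measurable borel (count_space UNIV)"
      unfolding Xpath_def using measurable_compose[OF pre_meas[of \<psi> "Suc i"], of "\<lambda>t. t ! i" "count_space UNIV"]
      by simp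
  qed simp
  then show ?thesis by simp
qed

definition Umeas :: "real measure" where "Umeas = uniform_measure lborel {0..<1}"

lemma Umeas_prob: "prob_space Umeas"
  unfolding Umeas_def by (rule prob_space_uniform_measure) auto

lemma sets_Umeas[simp]: "sets Umeas = sets borel"
  by (simp add: Umeas_def)

lemma space_Umeas[simp]: "space Umeas = UNIV"
  by (simp add: Umeas_def)

lemma mu_exists:
  assumes pr: "precise_fs \<psi>"
  shows "is_mu_of \<psi> (distr Umeas cantor (Xpath \<psi>))"
proof -
  have Xm: "Xpath \<psi> \<in> measurable Umeas cantor"
    using Xpath_meas measurable_cong_sets[of Umeas borel cantor cantor] by simp
  have bp: "borel_prob (distr Umeas cantor (Xpath \<psi>))"
    unfolding borel_prob_def using prob_space.prob_space_distr[OF Umeas_prob Xm] by simp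
  have "measure (distr Umeas cantor (Xpath \<psi>)) (cyl s) = Pw \<psi> s" for s
  proof -
    let ?l = "fst (iv \<psi> s)" and ?h = "snd (iv \<psi> s)"
    have inv: "0 \<le> ?l" "?l \<le> ?h" "?h \<le> 1" "?h - ?l = Pw \<psi> s" using iv_inv[OF pr, of s] by auto
    have "{0..<1} \<inter> (Xpath \<psi> -` cyl s \<inter> space Umeas) = {?l..<?h}"
    proof -
      have "x \<in> Xpath \<psi> -` cyl s \<longleftrightarrow> pre \<psi> x (length s) = s" for x
        by (simp add: in_cyl prefix_Xpath)
      then show ?thesis using pre_iff[OF pr] inv by (auto simp: Umeas_def)
    qed
    note eq = this
    have ms: "Xpath \<psi> -` cyl s \<inter> space Umeas \<in> sets lborel"
      using measurable_sets[OF Xpath_meas sets_cyl, of \<psi> s] by (simp add: Umeas_def)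
    have "emeasure (distr Umeas cantor (Xpath \<psi>)) (cyl s) = emeasure Umeas (Xpath \<psi> -` cyl s \<inter> space Umeas)"
      by (rule emeasure_distr[OF Xm sets_cyl])
    also have "\<dots> = emeasure lborel ({0..<1} \<inter> (Xpath \<psi> -` cyl s \<inter> space Umeas)) / emeasure lborel {0..<(1::real)}"
      unfolding Umeas_def by (rule emeasure_uniform_measure) (use ms in auto)
    also have "\<dots> = ennreal (?h - ?l)" unfolding eq using inv by (simp add: divide_ennreal_def)
    finally have "emeasure (distr Umeas cantor (Xpath \<psi>)) (cyl s) = ennreal (?h - ?l)" .
    then show ?thesis using inv by (simp add: measure_def)
  qed
  then show ?thesis using bp unfolding is_mu_of_def Pw_def by simp
qed


definition hasp :: "bool list set \<Rightarrow> bool list \<Rightarrow> bool" where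
  "hasp S s \<longleftrightarrow> (\<exists>k\<le>length s. take k s \<in> S)"

lemma hasp_snoc: "hasp S s \<Longrightarrow> hasp S (s @ [b])"
  unfolding hasp_def by (metis le_SucI length_append_singleton take_append take_eq_Nil diff_is_0_eq append_Nil2)

fun Val :: "(bool list \<Rightarrow> real set) \<Rightarrow> bool list set \<Rightarrow> nat \<Rightarrow> bool list \<Rightarrow> real" where
  "Val \<phi> S 0 s = (if hasp S s then 1 else 0)"
| "Val \<phi> S (Suc j) s = (if hasp S s then 1 else upper_exp (\<phi> s) (\<lambda>b. Val \<phi> S j (s @ [b])))"

lemma upper_exp_mono:
  assumes "interval01 I" "\<And>b. f b \<le> g b"
  shows "upper_exp I f \<le> upper_exp I g"
proof (rule upper_exp_le[OF assms(1)])
  fix p assume p: "p \<in> I"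
  obtain a b where ab: "0 \<le> a" "a \<le> b" "b \<le> 1" "I = {a..b}" using assms(1) by (rule interval01_obtain)
  have "p * f True + (1 - p) * f False \<le> p * g True + (1 - p) * g False"
    using p ab assms(2) by (intro add_mono mult_left_mono) auto
  also have "\<dots> \<le> upper_exp I g" by (rule upper_exp_ge[OF assms(1) p])
  finally show "p * f True + (1 - p) * f False \<le> upper_exp I g" .
qed

lemma Val_hasp: "hasp S s \<Longrightarrow> Val \<phi> S j s = 1"
  by (cases j) auto

lemma Val_01:
  assumes fs: "forecasting_system \<phi>"
  shows "0 \<le> Val \<phi> S j s \<and> Val \<phi> S j s \<le> 1"
proof (induction j arbitrary: s)
  case 0 then show ?case by simp
next
  case (Suc j)
  obtain a b where ab: "0 \<le> a" "a \<le> b" "b \<le> 1" "\<phi> s = {a..b}" using fs_interval[OF fs, of s] by (rule interval01_obtain)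
  let ?f = "\<lambda>c. Val \<phi> S j (s @ [c])"
  have "upper_exp (\<phi> s) ?f \<le> 1"
  proof (rule upper_exp_le[OF fs_interval[OF fs]])
    fix p assume "p \<in> \<phi> s"
    then have p: "0 \<le> p" "p \<le> 1" using ab by auto
    have "p * ?f True \<le> p * 1" "(1 - p) * ?f False \<le> (1 - p) * 1"
      using Suc.IH p by (intro mult_left_mono; auto)+
    then show "p * ?f True + (1 - p) * ?f False \<le> 1" by simp
  qed
  moreover have "0 \<le> upper_exp (\<phi> s) ?f"
  proof -
    have a: "a \<in> \<phi> s" using ab by auto
    have "0 \<le> a * ?f True + (1 - a) * ?f False" using Suc.IH ab by (intro add_nonneg_nonneg mult_nonneg_nonneg) auto
    also have "\<dots> \<le> upper_exp (\<phi> s) ?f" by (rule upper_exp_ge[OF fs_interval[OF fs] a])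
    finally show ?thesis .
  qed
  ultimately show ?case by simp
qed

lemma Val_mono:
  assumes fs: "forecasting_system \<phi>"
  shows "Val \<phi> S j s \<le> Val \<phi> S (Suc j) s"
proof (induction j arbitrary: s)
  case 0 then show ?case using Val_01[OF fs, of S "Suc 0" s] by auto
next
  case (Suc j)
  show ?case
  proof (cases "hasp S s")
    case False
    then show ?thesis using Suc.IH by (simp del: Val.simps(2) add: Val.simps(2)[of \<phi> S] upper_exp_mono[OF fs_interval[OF fs]])
  qed simp
qed


definition pick2 :: "real \<Rightarrow> real \<Rightarrow> real \<Rightarrow> real \<Rightarrow> real" where
  "pick2 a b x y = (if b * x + (1 - b) * y \<le> a * x + (1 - a) * y then a else b)"

lemma choose_cases: "pick2 a b x y = a \<or> pick2 a b x y = b"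
  by (simp add: pick2_def)

lemma choose_max: "pick2 a b x y * x + (1 - pick2 a b x y) * y = max (a * x + (1 - a) * y) (b * x + (1 - b) * y)"
  by (simp add: pick2_def max_def)

definition psiH :: "(bool list \<Rightarrow> real set) \<Rightarrow> bool list set \<Rightarrow> nat \<Rightarrow> bool list \<Rightarrow> real" where
  "psiH \<phi> S H s = pick2 (Inf (\<phi> s)) (Sup (\<phi> s)) (Val \<phi> S (H - length s - 1) (s @ [True])) (Val \<phi> S (H - length s - 1) (s @ [False]))"

lemma fs_endpoints:
  assumes fs: "forecasting_system \<phi>"
  shows "0 \<le> Inf (\<phi> s) \<and> Inf (\<phi> s) \<le> Sup (\<phi> s) \<and> Sup (\<phi> s) \<le> 1 \<and> \<phi> s = {Inf (\<phi> s)..Sup (\<phi> s)}"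
proof -
  obtain a b where ab: "0 \<le> a" "a \<le> b" "b \<le> 1" "\<phi> s = {a..b}" using fs_interval[OF fs, of s] by (rule interval01_obtain)
  then show ?thesis by simp
qed

lemma fs_Inf_Sup_in:
  assumes fs: "forecasting_system \<phi>"
  shows "Inf (\<phi> s) \<in> \<phi> s" "Sup (\<phi> s) \<in> \<phi> s"
proof -
  obtain a b where ab: "0 \<le> a" "a \<le> b" "b \<le> 1" "\<phi> s = {a..b}" using fs_interval[OF fs, of s] by (rule interval01_obtain)
  then show "Inf (\<phi> s) \<in> \<phi> s" "Sup (\<phi> s) \<in> \<phi> s" by auto
qed

lemma psiH_in: "forecasting_system \<phi> \<Longrightarrow> psiH \<phi> S H s \<in> \<phi> s"
  using fs_Inf_Sup_in[of \<phi> s] choose_cases unfolding psiH_def by metis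

lemma psiH_precise: "forecasting_system \<phi> \<Longrightarrow> precise_fs (psiH \<phi> S H)"
  unfolding precise_fs_def
proof
  fix s assume fs: "forecasting_system \<phi>"
  obtain a b where ab: "0 \<le> a" "a \<le> b" "b \<le> 1" "\<phi> s = {a..b}" using fs_interval[OF fs, of s] by (rule interval01_obtain)
  then show "0 \<le> psiH \<phi> S H s \<and> psiH \<phi> S H s \<le> 1" using psiH_in[OF fs, of S H s] by auto
qed

lemma psiH_opt:
  assumes fs: "forecasting_system \<phi>"
  shows "psiH \<phi> S H s * Val \<phi> S (H - length s - 1) (s @ [True]) + (1 - psiH \<phi> S H s) * Val \<phi> S (H - length s - 1) (s @ [False])
     = upper_exp (\<phi> s) (\<lambda>c. Val \<phi> S (H - length s - 1) (s @ [c]))"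
proof -
  have e: "0 \<le> Inf (\<phi> s)" "Inf (\<phi> s) \<le> Sup (\<phi> s)" "Sup (\<phi> s) \<le> 1" "\<phi> s = {Inf (\<phi> s)..Sup (\<phi> s)}"
    using fs_endpoints[OF fs, of s] by auto
  have "upper_exp (\<phi> s) (\<lambda>c. Val \<phi> S (H - length s - 1) (s @ [c])) = upper_exp {Inf (\<phi> s)..Sup (\<phi> s)} (\<lambda>c. Val \<phi> S (H - length s - 1) (s @ [c]))"
    using e(4) by (rule arg_cong)
  also have "\<dots> = max (Inf (\<phi> s) * Val \<phi> S (H - length s - 1) (s @ [True]) + (1 - Inf (\<phi> s)) * Val \<phi> S (H - length s - 1) (s @ [False]))
      (Sup (\<phi> s) * Val \<phi> S (H - length s - 1) (s @ [True]) + (1 - Sup (\<phi> s)) * Val \<phi> S (H - length s - 1) (s @ [False]))"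
    by (rule upper_exp_interval[OF e(1-3)])
  finally show ?thesis unfolding psiH_def choose_max by simp
qed

lemma cyl_sub: "k \<le> length s \<Longrightarrow> cyl s \<subseteq> cyl (take k s)"
proof
  fix \<omega> assume k: "k \<le> length s" and "\<omega> \<in> cyl s"
  then have "prefix \<omega> (length s) = s" by (simp add: in_cyl)
  then have "take k s = prefix \<omega> k" using k by (metis take_prefix min.absorb1)
  then show "\<omega> \<in> cyl (take k s)" using k by (simp add: in_cyl)
qed

lemma val_measure:
  assumes fs: "forecasting_system \<phi>" and mu: "is_mu_of (psiH \<phi> S H) \<mu>"
  shows "length s + j = H \<Longrightarrow>
    measure \<mu> (cyl s \<inter> cyl_union {t\<in>S. length t \<le> H}) = Pw (psiH \<phi> S H) s * Val \<phi> S j s"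
proof (induction j arbitrary: s)
  interpret prob_space \<mu> using is_mu_prob[OF mu] .
  have sets: "sets \<mu> = sets cantor" using is_mu_sets[OF mu] .
  let ?E = "cyl_union {t\<in>S. length t \<le> H}"
  {
    fix s assume h: "hasp S s" "length s \<le> H"
    then obtain k where k: "k \<le> length s" "take k s \<in> S" unfolding hasp_def by blast
    then have "cyl s \<subseteq> ?E" using cyl_sub[OF k(1)] h(2) unfolding cyl_union_def by force
    then have "measure \<mu> (cyl s \<inter> ?E) = Pw (psiH \<phi> S H) s"
      using is_mu_cyl[OF mu] by (simp add: Int_absorb2)
  } note hcase = this
  case 0
  show ?case
  proof (cases "hasp S s")
    case True then show ?thesis using hcase 0 by simp
  next
    case False
    have "cyl s \<inter> ?E = {}"
    proof (rule ccontr)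
      assume "cyl s \<inter> ?E \<noteq> {}"
      then obtain \<omega> t where w: "\<omega> \<in> cyl s" "t \<in> S" "length t \<le> H" "\<omega> \<in> cyl t"
        unfolding cyl_union_def by blast
      then have "take (length t) s = t" using 0 by (auto simp: in_cyl)
      then show False using False w 0 unfolding hasp_def by force
    qed
    then show ?thesis using False by simp
  qed
next
  interpret prob_space \<mu> using is_mu_prob[OF mu] .
  have sets: "sets \<mu> = sets cantor" using is_mu_sets[OF mu] .
  let ?E = "cyl_union {t\<in>S. length t \<le> H}"
  let ?\<psi> = "psiH \<phi> S H"
  case (Suc j)
  show ?case
  proof (cases "hasp S s")
    case True
    then obtain k where k: "k \<le> length s" "take k s \<in> S" unfolding hasp_def by blast
    then have "cyl s \<subseteq> ?E" using cyl_sub[OF k(1)] Suc.prems unfolding cyl_union_def by force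
    then have "measure \<mu> (cyl s \<inter> ?E) = Pw ?\<psi> s"
      using is_mu_cyl[OF mu] by (simp add: Int_absorb2)
    then show ?thesis using True by simp
  next
    case False
    have split: "cyl s \<inter> ?E = (cyl (s @ [True]) \<inter> ?E) \<union> (cyl (s @ [False]) \<inter> ?E)"
      using cyl_snoc[of s] by blast
    have "measure \<mu> (cyl s \<inter> ?E) = measure \<mu> (cyl (s @ [True]) \<inter> ?E) + measure \<mu> (cyl (s @ [False]) \<inter> ?E)"
      unfolding split using sets cyl_snoc_disj[of s] by (intro finite_measure_Union) auto
    also have "\<dots> = Pw ?\<psi> (s @ [True]) * Val \<phi> S j (s @ [True]) + Pw ?\<psi> (s @ [False]) * Val \<phi> S j (s @ [False])"
      using Suc.IH[of "s @ [True]"] Suc.IH[of "s @ [False]"] Suc.prems by simp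
    also have "\<dots> = Pw ?\<psi> s * (?\<psi> s * Val \<phi> S j (s @ [True]) + (1 - ?\<psi> s) * Val \<phi> S j (s @ [False]))"
      by (simp add: Pw_snoc algebra_simps)
    also have "\<dots> = Pw ?\<psi> s * Val \<phi> S (Suc j) s"
    proof -
      have j: "H - length s - 1 = j" using Suc.prems by simp
      show ?thesis using psiH_opt[OF fs, of S H s] False unfolding j by simp
    qed
    finally show ?thesis .
  qed
qed


lemma duality:
  assumes fs: "forecasting_system \<phi>"
    and hyp: "\<And>\<psi> \<mu>. precise_fs \<psi> \<Longrightarrow> (\<forall>s. \<psi> s \<in> \<phi> s) \<Longrightarrow> is_mu_of \<psi> \<mu> \<Longrightarrow> measure \<mu> (cyl_union S) \<le> c"
  shows "upper_prob \<phi> (cyl_union S) \<le> ereal c"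
proof -
  have V01: "0 \<le> Val \<phi> S j s" "Val \<phi> S j s \<le> 1" for j s using Val_01[OF fs] by auto
  have Vc: "Val \<phi> S H [] \<le> c" for H
  proof -
    let ?\<psi> = "psiH \<phi> S H"
    let ?\<mu> = "distr Umeas cantor (Xpath ?\<psi>)"
    have pr: "precise_fs ?\<psi>" by (rule psiH_precise[OF fs])
    have mu: "is_mu_of ?\<psi> ?\<mu>" by (rule mu_exists[OF pr])
    interpret prob_space ?\<mu> using is_mu_prob[OF mu] .
    have sets: "sets ?\<mu> = sets cantor" using is_mu_sets[OF mu] .
    have "Val \<phi> S H [] = measure ?\<mu> (cyl [] \<inter> cyl_union {t\<in>S. length t \<le> H})"
      using val_measure[OF fs mu, of "[]" H] by simp
    also have "\<dots> \<le> measure ?\<mu> (cyl_union S)"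
      by (rule finite_measure_mono) (auto simp: cyl_union_def sets)
    also have "\<dots> \<le> c" using psiH_in[OF fs] by (intro hyp[OF pr _ mu]) auto
    finally show ?thesis .
  qed
  define V where "V s = (SUP j. Val \<phi> S j s)" for s
  have conv: "(\<lambda>j. Val \<phi> S j s) \<longlonglongrightarrow> V s" for s
    unfolding V_def
    by (rule LIMSEQ_incseq_SUP) (auto intro!: incseq_SucI Val_mono[OF fs] simp: bdd_above_def intro: V01)
  have V_nn: "0 \<le> V s" for s using LIMSEQ_le_const[OF conv] V01 by blast
  have V_hasp: "hasp S s \<Longrightarrow> V s = 1" for s unfolding V_def using Val_hasp by simp
  have sm: "supermartingale \<phi> V"
    unfolding supermartingale_def
  proof
    fix s
    show "upper_exp (\<phi> s) (\<lambda>b. V (s @ [b])) \<le> V s"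
    proof (rule upper_exp_le[OF fs_interval[OF fs]])
      fix p assume p: "p \<in> \<phi> s"
      obtain a b where ab: "0 \<le> a" "a \<le> b" "b \<le> 1" "\<phi> s = {a..b}" using fs_interval[OF fs, of s] by (rule interval01_obtain)
      have l1: "(\<lambda>j. p * Val \<phi> S j (s @ [True]) + (1 - p) * Val \<phi> S j (s @ [False])) \<longlonglongrightarrow> p * V (s @ [True]) + (1 - p) * V (s @ [False])"
        by (intro tendsto_intros conv)
      have l2: "(\<lambda>j. Val \<phi> S (Suc j) s) \<longlonglongrightarrow> V s" using conv[of s] by (rule LIMSEQ_Suc)
      have le: "p * Val \<phi> S j (s @ [True]) + (1 - p) * Val \<phi> S j (s @ [False]) \<le> Val \<phi> S (Suc j) s" for j
      proof (cases "hasp S s")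
        case True
        then show ?thesis using Val_hasp[OF hasp_snoc[OF True]] by simp
      next
        case False
        then show ?thesis using upper_exp_ge[OF fs_interval[OF fs] p, of "\<lambda>b. Val \<phi> S j (s @ [b])"] by simp
      qed
      show "p * V (s @ [True]) + (1 - p) * V (s @ [False]) \<le> V s"
        by (rule LIMSEQ_le[OF l1 l2]) (intro exI allI impI, rule le)
    qed
  qed
  have lim: "ereal (indicator (cyl_union S) \<omega>) \<le> liminf (\<lambda>n. ereal (V (prefix \<omega> n)))" for \<omega>
    unfolding le_Liminf_iff
  proof (intro allI impI)
    fix y assume y: "y < ereal (indicator (cyl_union S) \<omega>)"
    show "eventually (\<lambda>n. y < ereal (V (prefix \<omega> n))) sequentially"
    proof (cases "\<omega> \<in> cyl_union S")
      case True
      then obtain t where t: "t \<in> S" "\<omega> \<in> cyl t" unfolding cyl_union_def by blast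
      have "eventually (\<lambda>n. V (prefix \<omega> n) = 1) sequentially"
        unfolding eventually_sequentially
      proof (intro exI allI impI)
        fix n assume n: "length t \<le> n"
        have "take (length t) (prefix \<omega> n) = t" using t n by (simp add: in_cyl min_def)
        then have "hasp S (prefix \<omega> n)" unfolding hasp_def using t n by force
        then show "V (prefix \<omega> n) = 1" by (rule V_hasp)
      qed
      then show ?thesis by eventually_elim (use y True in simp)
    next
      case False
      then show ?thesis using y V_nn by (simp add: less_le_trans)
    qed
  qed
  have "upper_prob \<phi> (cyl_union S) \<le> ereal (V [])"
    unfolding upper_prob_def by (rule INF_lower2[of V]) (use sm lim in auto)
  also have "V [] \<le> c" unfolding V_def by (rule cSUP_least) (auto intro: Vc)
  finally show ?thesis by simp
qed


lemma ereal_lt_enn: "0 \<le> x \<Longrightarrow> ereal x < enn2ereal t \<longleftrightarrow> ennreal x < t"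
  by (metis enn2ereal_ennreal less_ennreal.rep_eq)

lemma dirA:
  assumes fs: "forecasting_system \<phi>" and ml: "MLtest_random \<phi> \<omega>"
  shows "uniformly_random (M_class \<phi>) \<omega>"
  unfolding uniformly_random_def
proof (intro allI impI)
  fix \<tau> assume ct: "C_test (M_class \<phi>) \<tau>"
  then obtain B where B: "re_rat_str B" "\<And>r. {\<omega>. ereal (real_of_rat r) < enn2ereal (\<tau> \<omega>)} = cyl_union (section_rat B r)"
    and int: "\<And>\<mu>. \<mu> \<in> M_class \<phi> \<Longrightarrow> (\<integral>\<^sup>+ \<omega>. \<tau> \<omega> \<partial>\<mu>) \<le> 1"
    unfolding C_test_def by blast
  show "\<tau> \<omega> < \<infinity>"
  proof (rule ccontr)
    assume "\<not> \<tau> \<omega> < \<infinity>"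
    then have inf: "\<tau> \<omega> = \<infinity>" by (simp add: less_top[symmetric])
    define A where "A = {(n, s). ((2::rat) ^ n, s) \<in> B}"
    have secA: "section_nat A n = section_rat B (2 ^ n)" for n
      by (simp add: A_def section_nat_def section_rat_def)
    have Gn: "cyl_union (section_nat A n) = {\<omega>. ennreal (2 ^ n) < \<tau> \<omega>}" for n
      unfolding secA B(2)[symmetric] by (simp add: of_rat_power ereal_lt_enn)
    have "MLtest \<phi> A"
      unfolding MLtest_def
    proof (intro conjI allI)
      show "re_nat_str A" unfolding A_def by (rule re_pow2[OF B(1)])
      fix n
      show "upper_prob \<phi> (cyl_union (section_nat A n)) \<le> ereal ((1 / 2) ^ n)"
      proof (rule duality[OF fs])
        fix \<psi> \<mu> assume pr: "precise_fs \<psi>" and inphi: "\<forall>s. \<psi> s \<in> \<phi> s" and mu: "is_mu_of \<psi> \<mu>"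
        have muC: "\<mu> \<in> M_class \<phi>" unfolding M_class_def using pr inphi mu by blast
        interpret prob_space \<mu> using is_mu_prob[OF mu] .
        have sets: "sets \<mu> = sets cantor" using is_mu_sets[OF mu] .
        let ?G = "cyl_union (section_nat A n)"
        have Gm: "?G \<in> sets \<mu>" using sets by simp
        have "ennreal (2 ^ n) * emeasure \<mu> ?G = (\<integral>\<^sup>+ \<omega>. ennreal (2 ^ n) * indicator ?G \<omega> \<partial>\<mu>)"
          by (rule nn_integral_cmult_indicator[symmetric, OF Gm])
        also have "\<dots> \<le> (\<integral>\<^sup>+ \<omega>. \<tau> \<omega> \<partial>\<mu>)"
          by (rule nn_integral_mono) (auto simp: Gn indicator_def less_imp_le)
        also have "\<dots> \<le> 1" by (rule int[OF muC])
        finally have "ennreal (2 ^ n) * ennreal (measure \<mu> ?G) \<le> 1" by (simp add: emeasure_eq_measure)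
        then have "2 ^ n * measure \<mu> ?G \<le> 1" by (simp add: ennreal_mult'[symmetric])
        then show "measure \<mu> ?G \<le> (1 / 2) ^ n" by (simp add: field_simps power_divide)
      qed
    qed
    moreover have "\<omega> \<in> (\<Inter>n. cyl_union (section_nat A n))" using inf by (simp add: Gn)
    ultimately show False using ml unfolding MLtest_random_def by blast
  qed
qed


lemma two_n_le: "2 * n \<le> (2::nat) ^ n"
proof (induction n)
  case (Suc n)
  show ?case
  proof (cases "n = 0")
    case False
    then have "2 \<le> (2::nat) ^ n" by (metis One_nat_def not_gr0 one_less_power order_le_less power_one_right power_increasing_iff Suc_leI less_2_cases_iff)
    then show ?thesis using Suc by simp
  qed simp
qed simp

lemma term_bound: "real n * (1/2) ^ (2 * n) \<le> (1/2) ^ Suc n"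
proof -
  have "real n * (1/2) ^ n \<le> 1/2"
  proof -
    have "real (2 * n) \<le> real ((2::nat) ^ n)" using two_n_le[of n] by linarith
    then have "2 * real n \<le> 2 ^ n" by simp
    then show ?thesis by (simp add: field_simps power_divide)
  qed
  then have "real n * (1/2) ^ n * (1/2) ^ n \<le> 1/2 * (1/2) ^ n"
    by (intro mult_right_mono) auto
  then show ?thesis by (simp add: power_mult[symmetric] mult_2 power_add mult.assoc)
qed

lemma enn_term_le: "(f n :: ennreal) \<le> (\<Sum>i. f i)"
  using sum_le_suminf[OF summableI, of "{n}" f] by simp

lemma cyl_union_UNIV[simp]: "cyl_union UNIV = UNIV"
  unfolding cyl_union_def using cyl_Nil by blast

lemma sup_less:
  assumes E0: "E 0 = UNIV"
  shows "ereal x < enn2ereal (SUP n. of_nat n * indicator (E n) w) \<longleftrightarrow> (\<exists>n. x < real n \<and> w \<in> E n)"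
proof (cases "x < 0")
  case True
  have "ereal x < 0" using True by simp
  also have "0 \<le> enn2ereal (SUP n. of_nat n * indicator (E n) w)" by simp
  finally show ?thesis using True E0 by auto
next
  case False
  then have x: "0 \<le> x" by simp
  have "ereal x < enn2ereal (SUP n. of_nat n * indicator (E n) w) \<longleftrightarrow>
     ennreal x < (SUP n. of_nat n * indicator (E n) w)" by (rule ereal_lt_enn[OF x])
  also have "\<dots> \<longleftrightarrow> (\<exists>n. ennreal x < of_nat n * indicator (E n) w)" by (simp add: less_SUP_iff)
  also have "\<dots> \<longleftrightarrow> (\<exists>n. x < real n \<and> w \<in> E n)"
    by (auto simp: indicator_def ennreal_of_nat_eq_real_of_nat ennreal_less_iff[OF x])
  finally show ?thesis .
qed

lemma Bset_union:
  assumes E: "\<And>n. E n = cyl_union (if n = 0 then UNIV else section_nat A (2 * n))"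
  shows "{w. \<exists>n. real_of_rat r < real n \<and> w \<in> E n} = cyl_union (section_rat (Bset A) r)"
proof (intro set_eqI iffI)
  fix w assume "w \<in> {w. \<exists>n. real_of_rat r < real n \<and> w \<in> E n}"
  then obtain n where n: "real_of_rat r < real n" "w \<in> E n" by blast
  then obtain t where t: "t \<in> (if n = 0 then UNIV else section_nat A (2 * n))" "w \<in> cyl t"
    unfolding E cyl_union_def by blast
  define L where "L = prod_encode (n, length t)"
  have Lt: "length t \<le> L" unfolding L_def by (rule le_prod_encode_2)
  define s where "s = prefix w L"
  have pd: "prod_decode (length s) = (n, length t)" by (simp add: s_def L_def)
  have tk: "take (length t) s = t" using t(2) Lt by (simp add: s_def in_cyl min_def)
  have "(r, s) \<in> Bset A"
    unfolding Bset_def using n(1) pd tk t(1) by (auto simp: section_nat_def split: if_splits)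
  moreover have "w \<in> cyl s" by (simp add: s_def in_cyl)
  ultimately show "w \<in> cyl_union (section_rat (Bset A) r)"
    unfolding cyl_union_def section_rat_def by blast
next
  fix w assume "w \<in> cyl_union (section_rat (Bset A) r)"
  then obtain s where s: "(r, s) \<in> Bset A" "w \<in> cyl s" unfolding cyl_union_def section_rat_def by blast
  let ?n = "fst (prod_decode (length s))" and ?k = "snd (prod_decode (length s))"
  have k: "?k \<le> length s" using snd_pd_le by blast
  have wt: "w \<in> cyl (take ?k s)" using cyl_sub[OF k] s(2) by blast
  have "w \<in> E ?n"
  proof (cases "?n = 0")
    case True then show ?thesis unfolding E by simp
  next
    case False
    then have "take ?k s \<in> section_nat A (2 * ?n)" using s(1) by (simp add: Bset_def section_nat_def)
    then show ?thesis unfolding E cyl_union_def using False wt by auto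
  qed
  moreover have "real_of_rat r < real ?n" using s(1) by (simp add: Bset_def)
  ultimately show "w \<in> {w. \<exists>n. real_of_rat r < real n \<and> w \<in> E n}" by blast
qed

lemma dirB:
  assumes fs: "forecasting_system \<phi>" and ur: "uniformly_random (M_class \<phi>) \<omega>"
  shows "MLtest_random \<phi> \<omega>"
  unfolding MLtest_random_def
proof (intro allI impI notI)
  fix A assume ml: "MLtest \<phi> A" and win: "\<omega> \<in> (\<Inter>n. cyl_union (section_nat A n))"
  define E where "E n = cyl_union (if n = 0 then UNIV else section_nat A (2 * n))" for n
  define \<tau> where "\<tau> w = (SUP n. of_nat n * indicator (E n) w :: ennreal)" for w
  have E0: "E 0 = UNIV" by (simp add: E_def)
  have ct: "C_test (M_class \<phi>) \<tau>"
    unfolding C_test_def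
  proof (intro conjI ballI)
    show "\<exists>B. re_rat_str B \<and> (\<forall>r. {\<omega>. ereal (real_of_rat r) < enn2ereal (\<tau> \<omega>)} = cyl_union (section_rat B r))"
    proof (intro exI conjI allI)
      show "re_rat_str (Bset A)" using ml by (intro re_Bset) (simp add: MLtest_def)
      fix r
      show "{\<omega>. ereal (real_of_rat r) < enn2ereal (\<tau> \<omega>)} = cyl_union (section_rat (Bset A) r)"
        unfolding \<tau>_def sup_less[where E=E, OF E0] by (rule Bset_union) (simp add: E_def)
    qed
  next
    fix \<mu> assume "\<mu> \<in> M_class \<phi>"
    then obtain \<psi> where pr: "precise_fs \<psi>" and inphi: "\<And>s. \<psi> s \<in> \<phi> s" and mu: "is_mu_of \<psi> \<mu>"
      unfolding M_class_def by blast
    interpret prob_space \<mu> using is_mu_prob[OF mu] .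
    have sets: "sets \<mu> = sets cantor" using is_mu_sets[OF mu] .
    have Em: "E n \<in> sets \<mu>" for n using sets by (simp add: E_def)
    have bd: "of_nat n * emeasure \<mu> (E n) \<le> ennreal ((1/2) ^ Suc n)" for n
    proof (cases "n = 0")
      case True then show ?thesis by simp
    next
      case False
      have up: "upper_prob \<phi> (cyl_union (section_nat A (2 * n))) \<le> ereal ((1/2) ^ (2 * n))"
        using ml by (simp add: MLtest_def)
      have "measure \<mu> (E n) \<le> (1/2) ^ (2 * n)"
        unfolding E_def using False by (simp add: mu_le_upper[OF fs pr inphi mu _ up])
      then have "real n * measure \<mu> (E n) \<le> real n * (1/2) ^ (2 * n)" by (intro mult_left_mono) auto
      also have "\<dots> \<le> (1/2) ^ Suc n" by (rule term_bound)
      finally show ?thesis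
        by (simp add: emeasure_eq_measure ennreal_of_nat_eq_real_of_nat ennreal_mult'[symmetric])
    qed
    have "(\<integral>\<^sup>+ w. \<tau> w \<partial>\<mu>) \<le> (\<integral>\<^sup>+ w. (\<Sum>n. of_nat n * indicator (E n) w) \<partial>\<mu>)"
      unfolding \<tau>_def by (intro nn_integral_mono SUP_least enn_term_le)
    also have "\<dots> = (\<Sum>n. \<integral>\<^sup>+ w. of_nat n * indicator (E n) w \<partial>\<mu>)"
      by (rule nn_integral_suminf) (use Em in measurable)
    also have "\<dots> = (\<Sum>n. of_nat n * emeasure \<mu> (E n))"
      by (simp add: nn_integral_cmult_indicator Em)
    also have "\<dots> \<le> (\<Sum>n. ennreal ((1/2) ^ Suc n))"
      by (intro suminf_le bd) auto
    also have "\<dots> = ennreal 1"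
      by (rule suminf_ennreal_eq[OF _ power_half_series]) simp
    finally show "(\<integral>\<^sup>+ w. \<tau> w \<partial>\<mu>) \<le> 1" by simp
  qed
  have "\<omega> \<in> E n" for n using win by (cases "n = 0") (auto simp: E_def)
  then have "\<tau> \<omega> = (SUP n. of_nat n)" by (simp add: \<tau>_def)
  then have "\<tau> \<omega> = \<infinity>" by (simp add: ennreal_SUP_of_nat_eq_top)
  moreover have "\<tau> \<omega> < \<infinity>" using ur ct unfolding uniformly_random_def by blast
  ultimately show False by simp
qed


theorem theorem7p3:
  fixes \<phi> :: "bool list \<Rightarrow> real set" and \<omega> :: "nat \<Rightarrow> bool"
  assumes "forecasting_system \<phi>" and "computable_fs \<phi>"
  shows "MLtest_random \<phi> \<omega> \<longleftrightarrow> uniformly_random (M_class \<phi>) \<omega>"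
  using dirA[OF assms(1)] dirB[OF assms(1)] by blast

end
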